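(* Let $d\ge2$, $s\in(0,d)$ and $q\in[d-2,+\infty)$. Let $W_s(x)=|x|^{-s}\Phi(x/|x|)$ ($x\ne0$), $W_s(0)=+\infty$, with $\Phi:\mathbb{S}^{d-1}\to\mathbb{R}$ continuous, even and strictly positive. Let $E=RDB_1$ be an ellipsoid ($R\in\mathrm{SO}(d)$, $D$ positive-definite diagonal) and let $\mu_q^E$ be the push-forward of $\mu_q$ by $T^E(x)=RDx$. Then the potential $(W_s*\mu_q^E)(x)=\int W_s(x-y)\,d\mu_q^E(y)$ belongs to $L^1_{\mathrm{loc}}(\mathbb{R}^d)\cap C^0(\mathbb{R}^d\setminus\partial E)$. Moreover, if $0<s<\min(d,\frac{q+d}{2})$, then $W_s*\mu_q^E\in C^0(\mathbb{R}^d)$.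
   Context: For $q\ge d-2$, $\mu_q=c_{q,d}(1-|x|^2)^{\frac{q-d}{2}}\mathcal{L}^d\llcorner B_1$ if $q>d-2$ and $\mu_q=c_{q,d}\mathcal{H}^{d-1}\llcorner\partial B_1$ if $q=d-2$, where $c_{q,d}>0$ is the constant making $\mu_q$ a probability measure and $B_1$ is the closed unit ball centered at the origin. *)

theory Defs
  imports "HOL-Analysis.Analysis"
begin

definition Wker :: "real \<Rightarrow> (real^'n \<Rightarrow> real) \<Rightarrow> real^'n \<Rightarrow> ennreal" where
  "Wker s Phi x = (if x = 0 then \<infinity> else ennreal (norm x powr (- s) * Phi (sgn x)))"

definition potential :: "real \<Rightarrow> (real^'n \<Rightarrow> real) \<Rightarrow> (real^'n) measure \<Rightarrow> real^'n \<Rightarrow> ennreal" where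
  "potential s Phi M x = (\<integral>\<^sup>+ y. Wker s Phi (x - y) \<partial>M)"

text \<open>Normalized surface measure c H^(d-1) on the unit sphere, realised as the
  push-forward of the normalized Lebesgue measure on the unit ball under radial
  projection x |-> x/|x| (the cone-measure description of normalized H^(d-1) on the sphere).\<close>
definition sphere_prob :: "(real^('n::finite)) measure" where
  "sphere_prob = distr (uniform_measure lborel (cball 0 1)) borel sgn"

definition ball_dens :: "real \<Rightarrow> real^('n::finite) \<Rightarrow> ennreal" where
  "ball_dens q x = indicator (cball 0 1) x
      * ennreal ((1 - norm x ^ 2) powr ((q - real CARD('n)) / 2))"

definition mu_q :: "real \<Rightarrow> (real^('n::finite)) measure" where
  "mu_q q = (if q = real CARD('n) - 2 then sphere_prob
             else density lborel (\<lambda>x. ball_dens q x / (\<integral>\<^sup>+ y. ball_dens q (y::real^'n) \<partial>lborel)))"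

end

theory Submission
  imports Defs
begin

declare transpose_matrix_vector[simp del]

lemma orth_norm:
  fixes R :: "real^'n^'n"
  assumes "orthogonal_matrix R"
  shows "norm (R *v x) = norm x"
proof -
  have "orthogonal_transformation ((*v) R)"
    using assms by (simp add: orthogonal_transformation_matrix matrix_vector_mul_linear)
  then show ?thesis by (simp add: orthogonal_transformation)
qed

lemma orth_inv:
  fixes R :: "real^'n^'n"
  assumes "orthogonal_matrix R"
  shows "transpose R *v (R *v x) = x" "R *v (transpose R *v x) = x"
  using assms by (metis matrix_vector_mul_assoc matrix_vector_mul_lid orthogonal_matrix_def)+

lemma diag_mult:
  fixes D :: "real^'n^'n"
  assumes "\<forall>i j. i \<noteq> j \<longrightarrow> D $ i $ j = 0"
  shows "(D *v x) $ i = D $ i $ i * x $ i"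
proof -
  have "(D *v x) $ i = (\<Sum>j\<in>UNIV. D $ i $ j * x $ j)" by (simp add: matrix_vector_mult_def)
  also have "\<dots> = (\<Sum>j\<in>{i}. D $ i $ j * x $ j)"
    by (rule sum.mono_neutral_right) (use assms in auto)
  finally show ?thesis by simp
qed

definition Tinv :: "real^'n^'n \<Rightarrow> real^'n^'n \<Rightarrow> real^'n \<Rightarrow> real^'n" where
  "Tinv R D x = (\<chi> i. (transpose R *v x) $ i / D $ i $ i)"

definition dmin :: "real^'n^'n \<Rightarrow> real" where
  "dmin D = Min (range (\<lambda>i. D $ i $ i))"

lemma dmin_pos: "\<forall>i. D $ i $ i > 0 \<Longrightarrow> dmin D > 0"
  unfolding dmin_def by (subst Min_gr_iff) auto

lemma dmin_le: "dmin D \<le> D $ i $ i"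
  unfolding dmin_def by (rule Min_le) auto

lemma Tinv_T:
  assumes "orthogonal_matrix R" "\<forall>i j. i \<noteq> j \<longrightarrow> D $ i $ j = 0" "\<forall>i. D $ i $ i > 0"
  shows "Tinv R D (R *v (D *v y)) = y"
proof -
  have nz: "\<And>i. D $ i $ i \<noteq> 0" using assms(3) by (metis less_irrefl)
  show ?thesis using assms nz unfolding Tinv_def by (simp add: orth_inv diag_mult vec_eq_iff)
qed

lemma T_Tinv:
  assumes "orthogonal_matrix R" "\<forall>i j. i \<noteq> j \<longrightarrow> D $ i $ j = 0" "\<forall>i. D $ i $ i > 0"
  shows "R *v (D *v Tinv R D x) = x"
proof -
  have "D *v Tinv R D x = transpose R *v x"
  proof -
    have nz: "\<And>i. D $ i $ i \<noteq> 0" using assms(3) by (metis less_irrefl)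
    show ?thesis using assms nz unfolding Tinv_def by (simp add: diag_mult vec_eq_iff)
  qed
  then show ?thesis using assms by (simp add: orth_inv)
qed

lemma Tinv_diff: "Tinv R D x - Tinv R D y = Tinv R D (x - y)"
  unfolding Tinv_def by (simp add: vec_eq_iff matrix_vector_mult_diff_distrib diff_divide_distrib)

lemma Tinv_scale: "Tinv R D (c *\<^sub>R x) = c *\<^sub>R Tinv R D x"
  unfolding Tinv_def by (simp add: vec_eq_iff matrix_vector_mult_scaleR)

lemma norm_Tinv:
  assumes "orthogonal_matrix R" "\<forall>i. D $ i $ i > 0"
  shows "norm (Tinv R D x) \<le> norm x / dmin D"
proof -
  have dp: "dmin D > 0" using assms dmin_pos by blast
  have "norm (Tinv R D x) \<le> norm ((1 / dmin D) *\<^sub>R (transpose R *v x))"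
  proof (rule norm_le_componentwise_cart)
    fix i
    have "\<bar>(transpose R *v x) $ i\<bar> / D $ i $ i \<le> \<bar>(transpose R *v x) $ i\<bar> / dmin D"
      using dp assms dmin_le[of D i] by (intro divide_left_mono) auto
    then show "norm (Tinv R D x $ i) \<le> norm (((1 / dmin D) *\<^sub>R (transpose R *v x)) $ i)"
      using assms dp unfolding Tinv_def by (simp add: abs_div abs_of_pos)
  qed
  also have "\<dots> = norm x / dmin D"
    using dp assms by (simp add: orth_norm orthogonal_matrix_transpose)
  finally show ?thesis .
qed

lemma dyadic_exists:
  fixes t \<delta> :: real
  assumes "0 < t" "t < \<delta>"
  shows "\<exists>k::nat. \<delta> / 2 ^ Suc k \<le> t \<and> t < \<delta> / 2 ^ k"
proof -
  obtain N :: nat where N: "\<delta> / t < 2 ^ N" using real_arch_pow[of 2 "\<delta> / t"] by auto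
  have ex: "\<exists>K::nat. \<delta> / 2 ^ K \<le> t"
    using N assms by (intro exI[of _ N]) (auto simp: field_simps)
  define K where "K = (LEAST K::nat. \<delta> / 2 ^ K \<le> t)"
  have K1: "\<delta> / 2 ^ K \<le> t" unfolding K_def by (rule LeastI_ex[OF ex])
  have K0: "K \<noteq> 0" using K1 assms by (cases K) auto
  then obtain k where k: "K = Suc k" using not0_implies_Suc by blast
  have "\<not> \<delta> / 2 ^ k \<le> t" using not_less_Least[of k "\<lambda>K. \<delta> / 2 ^ K \<le> t"] k unfolding K_def by auto
  then show ?thesis using K1 k by (intro exI[of _ k]) auto
qed

lemma ennreal_le_suminf: "f k \<le> (\<Sum>i. f i :: ennreal)"
  using ennreal_suminf_lessD[of f "f k" k] by (meson not_le order.irrefl)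

lemma dyadic_algebra:
  fixes \<delta> s \<beta> :: real
  assumes "0 < \<delta>"
  shows "(\<delta> / 2 ^ Suc k) powr (-s) * (\<delta> / 2 ^ k) powr \<beta>
      = 2 powr s * \<delta> powr (\<beta> - s) * (2 powr (s - \<beta>)) ^ k"
proof -
  define u where "u = \<delta> / 2 ^ k"
  have u: "u > 0" using assms by (simp add: u_def)
  have "(\<delta> / 2 ^ Suc k) = u / 2" by (simp add: u_def)
  then have "(\<delta> / 2 ^ Suc k) powr (-s) * (\<delta> / 2 ^ k) powr \<beta> = (u / 2) powr (-s) * u powr \<beta>"
    by (simp add: u_def mult.commute)
  also have "\<dots> = 2 powr s * u powr (\<beta> - s)"
    using u by (simp add: powr_divide powr_minus powr_diff field_simps)
  also have "u powr (\<beta> - s) = \<delta> powr (\<beta> - s) * (2 powr (s - \<beta>)) ^ k"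
  proof -
    have e1: "u powr (\<beta> - s) = \<delta> powr (\<beta> - s) / (2 ^ k) powr (\<beta> - s)"
      using assms by (simp add: u_def powr_divide)
    have e2: "(2 ^ k :: real) powr (\<beta> - s) = 2 powr (real k * (\<beta> - s))"
      by (simp add: powr_realpow[symmetric] powr_powr)
    have e3: "(2 powr (s - \<beta>)) ^ k = 2 powr ((s - \<beta>) * real k)"
      by (simp add: powr_realpow[symmetric] powr_powr)
    have e4: "2 powr ((s - \<beta>) * real k) = 1 / 2 powr (real k * (\<beta> - s))"
      by (simp add: powr_minus_divide[symmetric] algebra_simps)
    show ?thesis using e1 e2 e3 e4 by simp
  qed
  finally show ?thesis by simp
qed

lemma tail_bound:
  fixes \<nu> :: "(real^'n) measure"
  assumes sets: "sets \<nu> = sets borel" and s: "0 < s" "s < \<beta>" and C: "0 \<le> C" and d: "0 < \<delta>"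
    and gr: "\<And>r. 0 < r \<Longrightarrow> r \<le> \<delta> \<Longrightarrow> emeasure \<nu> (ball x r) \<le> ennreal (C * r powr \<beta>)"
  shows "(\<integral>\<^sup>+y. indicator (ball x \<delta>) y * ennreal (norm (x - y) powr (-s)) \<partial>\<nu>)
           \<le> ennreal (C * 2 powr s / (1 - 2 powr (s - \<beta>)) * \<delta> powr (\<beta> - s))"
proof -
  define a where "a k = (\<delta> / 2 ^ Suc k) powr (-s)" for k :: nat
  have pw: "indicator (ball x \<delta>) y * ennreal (norm (x - y) powr (-s))
        \<le> (\<Sum>k. ennreal (a k) * indicator (ball x (\<delta> / 2 ^ k)) y)" for y
  proof (cases "y \<in> ball x \<delta> \<and> y \<noteq> x")
    case False
    then show ?thesis by (auto simp: indicator_def)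
  next
    case True
    then have t: "0 < dist x y" "dist x y < \<delta>" by auto
    obtain k where k: "\<delta> / 2 ^ Suc k \<le> dist x y" "dist x y < \<delta> / 2 ^ k"
      using dyadic_exists[OF t] by blast
    have "norm (x - y) powr (-s) \<le> a k"
      unfolding a_def using k d s by (intro powr_mono2') (auto simp: dist_norm)
    then have "indicator (ball x \<delta>) y * ennreal (norm (x - y) powr (-s))
        \<le> ennreal (a k) * indicator (ball x (\<delta> / 2 ^ k)) y"
      using True k by (auto simp: indicator_def intro!: ennreal_leI)
    also have "\<dots> \<le> (\<Sum>k. ennreal (a k) * indicator (ball x (\<delta> / 2 ^ k)) y)"
      by (rule ennreal_le_suminf)
    finally show ?thesis .
  qed
  have "(\<integral>\<^sup>+y. indicator (ball x \<delta>) y * ennreal (norm (x - y) powr (-s)) \<partial>\<nu>)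
      \<le> (\<integral>\<^sup>+y. (\<Sum>k. ennreal (a k) * indicator (ball x (\<delta> / 2 ^ k)) y) \<partial>\<nu>)"
    by (intro nn_integral_mono pw)
  also have "\<dots> = (\<Sum>k. \<integral>\<^sup>+y. ennreal (a k) * indicator (ball x (\<delta> / 2 ^ k)) y \<partial>\<nu>)"
    by (rule nn_integral_suminf) (subst measurable_cong_sets[OF sets refl], auto intro!: borel_measurable_times_ennreal borel_measurable_indicator)
  also have "\<dots> = (\<Sum>k. ennreal (a k) * emeasure \<nu> (ball x (\<delta> / 2 ^ k)))"
    by (subst nn_integral_cmult_indicator) (auto simp: sets)
  also have "\<dots> \<le> (\<Sum>k. ennreal (a k * (C * (\<delta> / 2 ^ k) powr \<beta>)))"
  proof (intro suminf_le)
    fix k :: nat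
    have "emeasure \<nu> (ball x (\<delta> / 2 ^ k)) \<le> ennreal (C * (\<delta> / 2 ^ k) powr \<beta>)"
      using d by (intro gr) (auto simp: field_simps)
    then have "ennreal (a k) * emeasure \<nu> (ball x (\<delta> / 2 ^ k)) \<le> ennreal (a k) * ennreal (C * (\<delta> / 2 ^ k) powr \<beta>)"
      by (rule mult_left_mono) simp
    then show "ennreal (a k) * emeasure \<nu> (ball x (\<delta> / 2 ^ k)) \<le> ennreal (a k * (C * (\<delta> / 2 ^ k) powr \<beta>))"
      using C by (simp add: a_def ennreal_mult mult.assoc)
  qed auto
  also have "(\<lambda>k. a k * (C * (\<delta> / 2 ^ k) powr \<beta>))
      = (\<lambda>k. C * 2 powr s * \<delta> powr (\<beta> - s) * (2 powr (s - \<beta>)) ^ k)"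
    using dyadic_algebra[OF d, of _ s \<beta>] by (auto simp: a_def fun_eq_iff)
  also have "(\<Sum>k. ennreal (C * 2 powr s * \<delta> powr (\<beta> - s) * (2 powr (s - \<beta>)) ^ k))
      = ennreal (\<Sum>k. C * 2 powr s * \<delta> powr (\<beta> - s) * (2 powr (s - \<beta>)) ^ k)"
  proof (rule suminf_ennreal2)
    have q: "2 powr (s - \<beta>) < 1" using s by (simp add: powr_less_one)
    show "summable (\<lambda>k. C * 2 powr s * \<delta> powr (\<beta> - s) * (2 powr (s - \<beta>)) ^ k)"
      using q by (intro summable_mult summable_geometric) auto
  qed (use C in auto)
  also have "(\<Sum>k. C * 2 powr s * \<delta> powr (\<beta> - s) * (2 powr (s - \<beta>)) ^ k)
      = C * 2 powr s * \<delta> powr (\<beta> - s) * (1 / (1 - 2 powr (s - \<beta>)))"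
  proof -
    have q: "2 powr (s - \<beta>) < 1" using s by (simp add: powr_less_one)
    show ?thesis using q by (subst suminf_mult) (auto simp: suminf_geometric summable_geometric)
  qed
  finally show ?thesis by (simp add: field_simps)
qed

definition kern_ok :: "real \<Rightarrow> (real^'n \<Rightarrow> real) \<Rightarrow> real \<Rightarrow> real \<Rightarrow> bool" where
  "kern_ok s Phi m M \<longleftrightarrow> 0 < s \<and> 0 < m \<and> 0 < M \<and> (\<forall>u\<in>sphere 0 1. m \<le> Phi u \<and> Phi u \<le> M)
     \<and> continuous_on (sphere 0 1) Phi"

definition gker :: "real \<Rightarrow> (real^'n \<Rightarrow> real) \<Rightarrow> real^'n \<Rightarrow> real" where
  "gker s Phi x = norm x powr (-s) * Phi (sgn x)"

definition wtr :: "real \<Rightarrow> (real^'n \<Rightarrow> real) \<Rightarrow> real \<Rightarrow> real^'n \<Rightarrow> real" where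
  "wtr s Phi L x = min (if x = 0 then L else gker s Phi x) L"

lemma sgn_sphere: "x \<noteq> 0 \<Longrightarrow> sgn (x::real^'n) \<in> sphere 0 1"
  by (simp add: norm_sgn)

lemma gker_bounds:
  assumes "kern_ok s Phi m M" "x \<noteq> 0"
  shows "m * norm x powr (-s) \<le> gker s Phi x" "gker s Phi x \<le> M * norm x powr (-s)"
  using assms sgn_sphere[OF assms(2)] unfolding kern_ok_def gker_def
  by (auto intro!: mult_right_mono simp: mult.commute)

lemma gker_nonneg: "kern_ok s Phi m M \<Longrightarrow> x \<noteq> 0 \<Longrightarrow> 0 \<le> gker s Phi x"
  using gker_bounds(1)[of s Phi m M x] unfolding kern_ok_def
  by (smt (verit) mult_nonneg_nonneg powr_ge_zero)

lemma Wker_gker: "x \<noteq> 0 \<Longrightarrow> Wker s Phi x = ennreal (gker s Phi x)"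
  by (simp add: Wker_def gker_def)

lemma Wker_ub: assumes "kern_ok s Phi m M" "x \<noteq> 0" shows "Wker s Phi x \<le> ennreal (M * norm x powr (-s))"
  using gker_bounds(2)[OF assms] assms by (simp add: Wker_gker ennreal_leI)

lemma gker_cont: "kern_ok s Phi m M \<Longrightarrow> continuous_on (- {0}) (gker s Phi)"
  unfolding gker_def kern_ok_def
  apply (intro continuous_intros)
   apply (auto intro!: continuous_on_compose2[where g=Phi and t="sphere 0 1"] continuous_intros
      simp: norm_sgn split: if_splits)
  done

lemma Wker_meas: "kern_ok s Phi m M \<Longrightarrow> Wker s Phi \<in> borel_measurable borel"
proof -
  assume K: "kern_ok s Phi m M"
  have "(\<lambda>x. if x \<in> {0} then \<infinity> else ennreal (gker s Phi x)) \<in> borel_measurable borel"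
    by (rule borel_measurable_continuous_on_if)
       (auto intro!: continuous_on_ennreal gker_cont[OF K])
  also have "(\<lambda>x. if x \<in> {0} then \<infinity> else ennreal (gker s Phi x)) = Wker s Phi"
    by (auto simp: fun_eq_iff Wker_def gker_def)
  finally show ?thesis .
qed

lemma wtr_eq: "kern_ok s Phi m M \<Longrightarrow> 0 \<le> L \<Longrightarrow> ennreal (wtr s Phi L x) = min (Wker s Phi x) (ennreal L)"
proof (cases "x = 0")
  case False
  assume K: "kern_ok s Phi m M" and L: "0 \<le> L"
  show ?thesis using False gker_nonneg[OF K False] L
    by (simp add: wtr_def Wker_gker min_ennreal)
qed (auto simp: wtr_def Wker_def)

lemma wtr_nonneg: "kern_ok s Phi m M \<Longrightarrow> 0 \<le> L \<Longrightarrow> 0 \<le> wtr s Phi L x"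
  by (auto simp: wtr_def gker_nonneg)

lemma wtr_le: "wtr s Phi L x \<le> L"
  by (auto simp: wtr_def)

lemma wtr_cont:
  fixes Phi :: "real^'n \<Rightarrow> real"
  assumes K: "kern_ok s Phi m M" and L: "0 < L"
  shows "continuous_on UNIV (wtr s Phi L)"
proof -
  have c1: "isCont (wtr s Phi L) x" if "x \<noteq> 0" for x
  proof -
    have "continuous_on (- {0}) (\<lambda>x. min (gker s Phi x) L)"
      by (intro continuous_intros gker_cont[OF K])
    then have "continuous_on (- {0}) (wtr s Phi L)"
      by (rule continuous_on_cong[THEN iffD1, rotated 2]) (auto simp: wtr_def)
    then show ?thesis using that continuous_on_eq_continuous_at[of "- {0}"] by auto
  qed
  have c0: "isCont (wtr s Phi L) 0"
  proof -
    define r where "r = (m / L) powr (1 / s)"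
    have s: "0 < s" and m: "0 < m" using K by (auto simp: kern_ok_def)
    have r: "0 < r" using m L by (simp add: r_def)
    have rs: "r powr (-s) = L / m"
      using m L s by (simp add: r_def powr_powr powr_minus_divide)
    have ev: "\<forall>\<^sub>F x in nhds 0. wtr s Phi L x = L"
    proof (rule eventually_nhds_metric[THEN iffD2], intro exI conjI allI impI)
      show "0 < r" by fact
      fix x :: "real^'n" assume "dist x 0 < r"
      then have nx: "norm x < r" by simp
      show "wtr s Phi L x = L"
      proof (cases "x = 0")
        case False
        have "L = m * r powr (-s)" using rs m by simp
        also have "\<dots> \<le> m * norm x powr (-s)"
          using nx False s m by (intro mult_left_mono powr_mono2') auto
        also have "\<dots> \<le> gker s Phi x" using gker_bounds(1)[OF K False] .
        finally show ?thesis using False by (simp add: wtr_def)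
      qed (simp add: wtr_def)
    qed
    have "wtr s Phi L 0 = L" by (simp add: wtr_def)
    then show ?thesis unfolding continuous_at
      using ev by (intro tendsto_eventually) (auto simp: eventually_at_filter elim: eventually_mono)
  qed
  show ?thesis using c0 c1 by (metis continuous_at_imp_continuous_on)
qed

lemma ennreal_min_diff: "(a::ennreal) = min a b + (a - b)"
proof (cases "a = top")
  case True then show ?thesis by simp
next
  case nt: False
  show ?thesis
  proof (cases "a \<le> b")
    case True then have "a - b = 0" using nt by (simp add: diff_eq_0_iff_ennreal top.not_eq_extremum)
    then show ?thesis using True by simp
  next
    case False then show ?thesis by (simp add: add_diff_inverse_ennreal)
  qed
qed

lemma F_cont:
  fixes \<nu> :: "(real^'n) measure" and Phi :: "real^'n \<Rightarrow> real"
  assumes K: "kern_ok s Phi m M" and fin: "finite_measure \<nu>" and sets: "sets \<nu> = sets borel"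
    and L: "0 < L"
  shows "continuous_on UNIV (\<lambda>x. \<integral>y. wtr s Phi L (x - y) \<partial>\<nu>)"
proof (subst continuous_on_sequentially, intro allI ballI impI, elim conjE)
  fix xs :: "nat \<Rightarrow> real^'n" and a assume lim: "xs \<longlonglongrightarrow> a"
  have wc: "continuous_on UNIV (wtr s Phi L)" by (rule wtr_cont[OF K L])
  have wm: "wtr s Phi L \<in> borel_measurable borel" using wc by (rule borel_measurable_continuous_onI)
  have meas: "(\<lambda>y. wtr s Phi L (c - y)) \<in> borel_measurable \<nu>" for c
    by (subst measurable_cong_sets[OF sets refl]) (intro measurable_compose[OF _ wm], measurable)
  have "(\<lambda>i. \<integral>y. wtr s Phi L (xs i - y) \<partial>\<nu>) \<longlonglongrightarrow> \<integral>y. wtr s Phi L (a - y) \<partial>\<nu>"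
  proof (rule integral_dominated_convergence[where w="\<lambda>_. L"])
    show "integrable \<nu> (\<lambda>_. L)" using fin by (simp add: finite_measure.integrable_const)
    show "AE y in \<nu>. (\<lambda>i. wtr s Phi L (xs i - y)) \<longlonglongrightarrow> wtr s Phi L (a - y)"
    proof (rule AE_I2)
      fix y
      have "isCont (wtr s Phi L) (a - y)" using wc by (simp add: continuous_on_eq_continuous_at)
      then show "(\<lambda>i. wtr s Phi L (xs i - y)) \<longlonglongrightarrow> wtr s Phi L (a - y)"
        using lim by (intro isCont_tendsto_compose[where g="wtr s Phi L"]) (auto intro: tendsto_intros)
    qed
    show "AE y in \<nu>. norm (wtr s Phi L (xs i - y)) \<le> L" for i
      using wtr_nonneg[OF K, of L] wtr_le[of s Phi L] L by (intro AE_I2) auto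
  qed (auto intro: meas)
  then show "((\<lambda>x. \<integral>y. wtr s Phi L (x - y) \<partial>\<nu>) \<circ> xs) \<longlonglongrightarrow> \<integral>y. wtr s Phi L (a - y) \<partial>\<nu>"
    by (simp add: comp_def)
qed

lemma pred_ball_borel[measurable]: "Measurable.pred borel (\<lambda>y. y \<in> ball (x::real^'n) r)"
proof -
  have "{y \<in> space borel. y \<in> ball x r} = ball x r" by auto
  then show ?thesis unfolding pred_def by simp
qed

lemma meas_norm_powr[measurable]: "(\<lambda>y. norm ((x::real^'n) - y) powr a) \<in> borel_measurable borel"
  by (intro powr_real_measurable borel_measurable_norm) (auto intro!: borel_measurable_continuous_onI continuous_intros)

lemma singleton_null_growth:
  fixes \<nu> :: "(real^'n) measure"
  assumes fin: "finite_measure \<nu>" and sets: "sets \<nu> = sets borel" and r0: "0 < r0" and \<beta>: "0 < \<beta>"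
    and C: "0 \<le> C"
    and gr: "\<And>r. 0 < r \<Longrightarrow> r \<le> r0 \<Longrightarrow> emeasure \<nu> (ball x r) \<le> ennreal (C * r powr \<beta>)"
  shows "emeasure \<nu> {x} = 0"
proof (rule ccontr)
  assume "emeasure \<nu> {x} \<noteq> 0"
  moreover have fx: "emeasure \<nu> {x} = ennreal (measure \<nu> {x})"
    using fin by (simp add: finite_measure.emeasure_eq_measure)
  ultimately have a: "measure \<nu> {x} > 0" by (simp add: measure_nonneg order_less_le)
  define a where "a = measure \<nu> {x}"
  define r where "r = min r0 ((a / (C + 1)) powr (1 / \<beta>))"
  have apos: "a > 0" using a by (simp add: a_def)
  have r: "0 < r" "r \<le> r0" using r0 apos C by (auto simp: r_def)
  have "r powr \<beta> \<le> ((a / (C + 1)) powr (1 / \<beta>)) powr \<beta>"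
    using r \<beta> by (intro powr_mono2) (auto simp: r_def)
  also have "\<dots> = a / (C + 1)" using \<beta> apos C by (simp add: powr_powr)
  finally have rb: "r powr \<beta> \<le> a / (C + 1)" .
  have "C * r powr \<beta> \<le> C * (a / (C + 1))" using rb C by (rule mult_left_mono)
  also have "\<dots> < a" using apos C by (simp add: field_simps)
  finally have lt: "C * r powr \<beta> < a" .
  have "{x} \<subseteq> ball x r" using r by auto
  then have "emeasure \<nu> {x} \<le> emeasure \<nu> (ball x r)"
    by (intro emeasure_mono) (auto simp: sets)
  also have "\<dots> \<le> ennreal (C * r powr \<beta>)" using gr r by blast
  finally have "a \<le> C * r powr \<beta>" using fx C
    by (simp add: a_def ennreal_le_iff)
  then show False using lt by simp
qed

lemma pot_cont:
  fixes \<nu> :: "(real^'n) measure" and Phi :: "real^'n \<Rightarrow> real"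
  assumes K: "kern_ok s Phi m M" and fin: "finite_measure \<nu>" and sets: "sets \<nu> = sets borel"
    and \<epsilon>: "0 < \<epsilon>" and r0: "0 < r0" and \<beta>: "s < \<beta>" and C: "0 \<le> C"
    and gr: "\<And>x r. x \<in> ball x0 \<epsilon> \<Longrightarrow> 0 < r \<Longrightarrow> r \<le> r0 \<Longrightarrow> emeasure \<nu> (ball x r) \<le> ennreal (C * r powr \<beta>)"
  shows "\<forall>x\<in>ball x0 \<epsilon>. potential s Phi \<nu> x < \<infinity>"
    and "isCont (\<lambda>x. enn2real (potential s Phi \<nu> x)) x0"
proof -
  have s: "0 < s" and Mp: "0 < M" using K by (auto simp: kern_ok_def)
  define Kc where "Kc = C * 2 powr s / (1 - 2 powr (s - \<beta>))"
  have q: "2 powr (s - \<beta>) < 1" using \<beta> by (simp add: powr_less_one)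
  have Kc: "0 \<le> Kc" using C q by (simp add: Kc_def)
  define F where "F L x = (\<integral>y. wtr s Phi L (x - y) \<partial>\<nu>)" for L x
  define G where "G L x = (\<integral>\<^sup>+y. (Wker s Phi (x - y) - ennreal L) \<partial>\<nu>)" for L x
  define dl where "dl L = (M / L) powr (1 / s)" for L
  define e where "e L = M * Kc * dl L powr (\<beta> - s)" for L
  define L0 where "L0 = max 1 (M / r0 powr s)"
  have L0: "0 < L0" by (simp add: L0_def)
  have Wm: "Wker s Phi \<in> borel_measurable borel" by (rule Wker_meas[OF K])
  have measW: "(\<lambda>y. Wker s Phi (x - y)) \<in> borel_measurable \<nu>" for x
    by (subst measurable_cong_sets[OF sets refl]) (intro measurable_compose[OF _ Wm], measurable)
  have wm: "wtr s Phi L \<in> borel_measurable borel" if "0 < L" for L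
    using wtr_cont[OF K that] by (rule borel_measurable_continuous_onI)
  have measw: "(\<lambda>y. wtr s Phi L (x - y)) \<in> borel_measurable \<nu>" if "0 < L" for x L
    by (subst measurable_cong_sets[OF sets refl]) (intro measurable_compose[OF _ wm[OF that]], measurable)
  have dlpos: "0 < dl L" if "0 < L" for L using that Mp by (simp add: dl_def)
  have dl_le: "dl L \<le> r0" if "L0 \<le> L" for L
  proof -
    have Lp: "0 < L" using that L0 by simp
    have "M / L \<le> M / (M / r0 powr s)"
      using that Mp r0 by (intro divide_left_mono) (auto simp: L0_def)
    also have "\<dots> = r0 powr s" using Mp r0 by simp
    finally have "dl L \<le> (r0 powr s) powr (1 / s)"
      unfolding dl_def using Lp Mp s by (intro powr_mono2) auto
    also have "\<dots> = r0" using s r0 by (simp add: powr_powr)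
    finally show ?thesis .
  qed
  have decomp: "potential s Phi \<nu> x = ennreal (F L x) + G L x" if "0 < L" for x L
  proof -
    have "potential s Phi \<nu> x = (\<integral>\<^sup>+y. (min (Wker s Phi (x - y)) (ennreal L) + (Wker s Phi (x - y) - ennreal L)) \<partial>\<nu>)"
      unfolding potential_def by (subst ennreal_min_diff[symmetric]) rule
    also have "\<dots> = (\<integral>\<^sup>+y. min (Wker s Phi (x - y)) (ennreal L) \<partial>\<nu>) + G L x"
      unfolding G_def by (rule nn_integral_add) (auto intro!: measW borel_measurable_min borel_measurable_minus_ennreal)
    also have "(\<integral>\<^sup>+y. min (Wker s Phi (x - y)) (ennreal L) \<partial>\<nu>) = (\<integral>\<^sup>+y. ennreal (wtr s Phi L (x - y)) \<partial>\<nu>)"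
      using that by (simp add: wtr_eq[OF K])
    also have "\<dots> = ennreal (F L x)"
      unfolding F_def
    proof (rule nn_integral_eq_integral)
      show "integrable \<nu> (\<lambda>y. wtr s Phi L (x - y))"
        using fin that wtr_nonneg[OF K, of L] wtr_le[of s Phi L]
        by (intro finite_measure.integrable_const_bound[where B=L] AE_I2 measw) auto
    qed (use wtr_nonneg[OF K, of L] that in auto)
    finally show ?thesis .
  qed
  have Gb: "G L x \<le> ennreal (e L)" if x: "x \<in> ball x0 \<epsilon>" and L: "L0 \<le> L" for x L
  proof -
    have Lp: "0 < L" using L L0 by simp
    have d: "0 < dl L" "dl L \<le> r0" using dlpos[OF Lp] dl_le[OF L] by auto
    have null: "emeasure \<nu> {x} = 0"
      by (rule singleton_null_growth[OF fin sets r0 _ C, where x=x and \<beta>=\<beta>]) (use gr[OF x] s \<beta> in auto)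
    have dls: "dl L powr (-s) = L / M"
      using Mp Lp s by (simp add: dl_def powr_powr powr_minus_divide)
    have ae: "AE y in \<nu>. Wker s Phi (x - y) - ennreal L
              \<le> ennreal M * (indicator (ball x (dl L)) y * ennreal (norm (x - y) powr (-s)))"
    proof (rule AE_I'[of "{x}"])
      show "{x} \<in> null_sets \<nu>" using null by (auto simp: null_sets_def sets)
    next
      show "{y \<in> space \<nu>. \<not> (Wker s Phi (x - y) - ennreal L
              \<le> ennreal M * (indicator (ball x (dl L)) y * ennreal (norm (x - y) powr (-s))))} \<subseteq> {x}"
      proof (clarify)
        fix y assume y: "y \<in> space \<nu>" and nle: "\<not> (Wker s Phi (x - y) - ennreal L
              \<le> ennreal M * (indicator (ball x (dl L)) y * ennreal (norm (x - y) powr (-s))))"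
        show "y = x"
        proof (rule ccontr)
          assume "y \<noteq> x"
          then have nz: "x - y \<noteq> 0" by simp
          have ub: "Wker s Phi (x - y) \<le> ennreal (M * norm (x - y) powr (-s))" by (rule Wker_ub[OF K nz])
          show False
          proof (cases "y \<in> ball x (dl L)")
            case True
            have "Wker s Phi (x - y) - ennreal L \<le> Wker s Phi (x - y)" by (rule diff_le_self_ennreal)
            also have "\<dots> \<le> ennreal M * (indicator (ball x (dl L)) y * ennreal (norm (x - y) powr (-s)))"
              using ub True Mp by (simp add: ennreal_mult)
            finally show False using nle by simp
          next
            case False
            then have "dl L \<le> norm (x - y)" by (simp add: dist_norm)
            then have "norm (x - y) powr (-s) \<le> dl L powr (-s)"
              using d s by (intro powr_mono2') auto
            then have "M * norm (x - y) powr (-s) \<le> L" using dls Mp by (simp add: field_simps)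
            then have "Wker s Phi (x - y) \<le> ennreal L" using ub by (meson ennreal_leI order_trans)
            then have "Wker s Phi (x - y) - ennreal L = 0"
              by (simp add: diff_eq_0_iff_ennreal) (metis ennreal_less_top order_le_less_trans)
            then show False using nle by simp
          qed
        qed
      qed
    qed
    have "G L x \<le> (\<integral>\<^sup>+y. ennreal M * (indicator (ball x (dl L)) y * ennreal (norm (x - y) powr (-s))) \<partial>\<nu>)"
      unfolding G_def by (rule nn_integral_mono_AE[OF ae])
    also have "\<dots> = ennreal M * (\<integral>\<^sup>+y. indicator (ball x (dl L)) y * ennreal (norm (x - y) powr (-s)) \<partial>\<nu>)"
      by (rule nn_integral_cmult) (subst measurable_cong_sets[OF sets refl], measurable)
    also have "\<dots> \<le> ennreal M * ennreal (Kc * dl L powr (\<beta> - s))"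
      unfolding Kc_def
      by (intro mult_left_mono tail_bound[OF sets s \<beta> C d(1)] gr[OF x]) (use d in auto)
    also have "\<dots> = ennreal (e L)" using Mp Kc by (simp add: e_def ennreal_mult mult.assoc)
    finally show ?thesis .
  qed
  have epos: "0 \<le> e L" if "0 < L" for L using Mp Kc dlpos[OF that] by (simp add: e_def)
  show fin_pot: "\<forall>x\<in>ball x0 \<epsilon>. potential s Phi \<nu> x < \<infinity>"
  proof
    fix x assume x: "x \<in> ball x0 \<epsilon>"
    have "G L0 x < \<infinity>" using Gb[OF x order.refl] by (simp add: le_less_trans)
    then show "potential s Phi \<nu> x < \<infinity>" using decomp[OF L0] by simp
  qed
  have diff: "\<bar>enn2real (potential s Phi \<nu> x) - F L x\<bar> \<le> e L" if x: "x \<in> ball x0 \<epsilon>" and L: "L0 \<le> L" for x L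
  proof -
    have Lp: "0 < L" using L L0 by simp
    have Gf: "G L x \<le> ennreal (e L)" by (rule Gb[OF x L])
    then have Gt: "G L x < \<infinity>" by (simp add: le_less_trans)
    have Fn: "0 \<le> F L x" unfolding F_def using wtr_nonneg[OF K, of L] Lp by (intro integral_nonneg_AE AE_I2) auto
    have "enn2real (potential s Phi \<nu> x) = F L x + enn2real (G L x)"
      using decomp[OF Lp, of x] Gt Fn by (simp add: enn2real_plus)
    moreover have "enn2real (G L x) \<le> e L" using Gf epos[OF Lp]
      by (metis enn2real_ennreal enn2real_mono ennreal_less_top)
    ultimately show ?thesis by simp
  qed
  have elim: "(e \<longlongrightarrow> 0) at_top"
  proof -
    have "((\<lambda>L. M / L) \<longlongrightarrow> 0) at_top"
      by (rule real_tendsto_divide_at_top[OF tendsto_const filterlim_ident])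
    then have "((\<lambda>L. (M / L) powr ((\<beta> - s) / s)) \<longlongrightarrow> 0) at_top"
      using s \<beta> Mp by (intro tendsto_zero_powrI[where b="(\<beta> - s) / s"]) (auto intro!: eventually_mono[OF eventually_gt_at_top[of 0]])
    then have "((\<lambda>L. M * Kc * (M / L) powr ((\<beta> - s) / s)) \<longlongrightarrow> M * Kc * 0) at_top"
      by (intro tendsto_mult tendsto_const)
    moreover have "\<forall>\<^sub>F L in at_top. M * Kc * (M / L) powr ((\<beta> - s) / s) = e L"
      using eventually_gt_at_top[of 0]
      by eventually_elim (simp add: e_def dl_def powr_powr)
    ultimately show ?thesis by (simp add: tendsto_cong)
  qed
  have ul: "uniform_limit (ball x0 \<epsilon>) F (\<lambda>x. enn2real (potential s Phi \<nu> x)) at_top"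
    unfolding uniform_limit_iff
  proof (intro allI impI)
    fix r :: real assume r: "0 < r"
    have "\<forall>\<^sub>F L in at_top. e L < r" using order_tendstoD(2)[OF elim r] .
    then show "\<forall>\<^sub>F L in at_top. \<forall>x\<in>ball x0 \<epsilon>. dist (F L x) (enn2real (potential s Phi \<nu> x)) < r"
      using eventually_ge_at_top[of L0]
    proof eventually_elim
      case (elim L)
      then show ?case using diff by (force simp: dist_real_def abs_minus_commute)
    qed
  qed
  have "continuous_on (ball x0 \<epsilon>) (\<lambda>x. enn2real (potential s Phi \<nu> x))"
  proof (rule uniform_limit_theorem[OF _ ul])
    show "\<forall>\<^sub>F L in at_top. continuous_on (ball x0 \<epsilon>) (F L)"
      using eventually_gt_at_top[of 0]
      by eventually_elim (unfold F_def, rule continuous_on_subset[OF F_cont[OF K fin sets]], auto)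
  qed simp
  then show "isCont (\<lambda>x. enn2real (potential s Phi \<nu> x)) x0"
    using \<epsilon> by (simp add: continuous_on_eq_continuous_at)
qed

lemma Wdiff_meas:
  fixes Phi :: "real^'n \<Rightarrow> real"
  assumes K: "kern_ok s Phi m M"
  shows "(\<lambda>p. Wker s Phi (fst p - snd p)) \<in> borel_measurable (borel \<Otimes>\<^sub>M borel :: ((real^'n) \<times> (real^'n)) measure)"
  unfolding borel_prod
  by (intro measurable_compose[OF _ Wker_meas[OF K]] borel_measurable_continuous_onI continuous_intros)

lemma pot_meas:
  fixes \<nu> :: "(real^'n) measure" and Phi :: "real^'n \<Rightarrow> real"
  assumes K: "kern_ok s Phi m M" and fin: "finite_measure \<nu>" and sets: "sets \<nu> = sets borel"
  shows "potential s Phi \<nu> \<in> borel_measurable borel"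
proof -
  interpret fin: finite_measure \<nu> by fact
  have "(\<lambda>p. Wker s Phi (fst p - snd p)) \<in> borel_measurable (borel \<Otimes>\<^sub>M \<nu>)"
    using Wdiff_meas[OF K] by (subst measurable_cong_sets[OF sets_pair_measure_cong[OF refl sets] refl])
  then have "case_prod (\<lambda>x y. Wker s Phi (x - y)) \<in> borel_measurable (borel \<Otimes>\<^sub>M \<nu>)"
    by (simp add: split_def)
  then show ?thesis unfolding potential_def[abs_def]
    by (rule fin.borel_measurable_nn_integral)
qed

lemma pot_L1loc:
  fixes \<nu> :: "(real^'n) measure" and Phi :: "real^'n \<Rightarrow> real"
  assumes K: "kern_ok s Phi m M" and fin: "finite_measure \<nu>" and sets: "sets \<nu> = sets borel"
    and sd: "s < real CARD('n)" and cK: "compact A"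
  shows "(\<integral>\<^sup>+ x \<in> A. potential s Phi \<nu> x \<partial>lebesgue) < \<infinity>"
proof -
  interpret fin: finite_measure \<nu> by fact
  interpret p: pair_sigma_finite lborel \<nu>
    by (intro pair_sigma_finite.intro lborel.sigma_finite_measure_axioms fin.sigma_finite_measure_axioms)
  have s: "0 < s" and Mp: "0 < M" using K by (auto simp: kern_ok_def)
  have Ab: "A \<in> sets borel" using cK by (simp add: compact_imp_closed borel_closed)
  define d where "d = real CARD('n)"
  define Kc where "Kc = unit_ball_vol d * 2 powr s / (1 - 2 powr (s - d))"
  have m1: "(\<lambda>p. Wker s Phi (fst p - snd p) * indicator A (fst p)) \<in> borel_measurable (lborel \<Otimes>\<^sub>M \<nu>)"
    using Wdiff_meas[OF K] Ab
    by (subst measurable_cong_sets[OF sets_pair_measure_cong[OF sets_lborel sets] refl])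
       (intro borel_measurable_times_ennreal measurable_compose[OF measurable_fst borel_measurable_indicator], auto)
  have "(\<integral>\<^sup>+ x \<in> A. potential s Phi \<nu> x \<partial>lebesgue) = (\<integral>\<^sup>+ x. potential s Phi \<nu> x * indicator A x \<partial>lborel)"
    by (simp add: nn_integral_completion)
  also have "\<dots> = (\<integral>\<^sup>+ x. (\<integral>\<^sup>+ y. Wker s Phi (x - y) * indicator A x \<partial>\<nu>) \<partial>lborel)"
    unfolding potential_def
    by (intro nn_integral_cong nn_integral_multc[symmetric])
       (subst measurable_cong_sets[OF sets refl], intro measurable_compose[OF _ Wker_meas[OF K]], measurable)
  also have "\<dots> = (\<integral>\<^sup>+ y. (\<integral>\<^sup>+ x. Wker s Phi (x - y) * indicator A x \<partial>lborel) \<partial>\<nu>)"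
    by (rule p.Fubini'[symmetric]) (use m1 in \<open>simp add: split_def\<close>)
  also have "\<dots> \<le> (\<integral>\<^sup>+ y. ennreal (M * Kc + M * enn2real (emeasure lborel A)) \<partial>\<nu>)"
  proof (rule nn_integral_mono)
    fix y :: "real^'n"
    have ae: "AE x in lborel. Wker s Phi (x - y) * indicator A x
        \<le> ennreal M * (indicator (ball y 1) x * ennreal (norm (y - x) powr (-s))) + ennreal M * indicator A x"
    proof (rule AE_I'[of "{y}"])
      show "{y} \<in> null_sets lborel" by (rule countable_imp_null_set_lborel) simp
    next
      show "{x \<in> space lborel. \<not> (Wker s Phi (x - y) * indicator A x
        \<le> ennreal M * (indicator (ball y 1) x * ennreal (norm (y - x) powr (-s))) + ennreal M * indicator A x)} \<subseteq> {y}"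
      proof clarify
        fix x assume nle: "\<not> (Wker s Phi (x - y) * indicator A x
          \<le> ennreal M * (indicator (ball y 1) x * ennreal (norm (y - x) powr (-s))) + ennreal M * indicator A x)"
        show "x = y"
        proof (rule ccontr)
          assume "x \<noteq> y"
          then have nz: "x - y \<noteq> 0" by simp
          have ub: "Wker s Phi (x - y) \<le> ennreal (M * norm (y - x) powr (-s))"
            using Wker_ub[OF K nz] by (simp add: norm_minus_commute)
          show False
          proof (cases "x \<in> ball y 1")
            case True
            have "Wker s Phi (x - y) * indicator A x \<le> Wker s Phi (x - y)"
              by (simp add: indicator_def)
            also have "\<dots> \<le> ennreal M * (indicator (ball y 1) x * ennreal (norm (y - x) powr (-s)))"
              using ub True Mp by (simp add: ennreal_mult)
            finally show False using nle by (meson add_increasing2 zero_le order_trans)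
          next
            case False
            then have "1 \<le> norm (y - x)" by (simp add: dist_norm)
            then have "norm (y - x) powr (-s) \<le> 1 powr (-s)"
              using s by (intro powr_mono2') auto
            then have "M * norm (y - x) powr (-s) \<le> M" using Mp by simp
            then have "Wker s Phi (x - y) \<le> ennreal M" using ub by (meson ennreal_leI order_trans)
            then have "Wker s Phi (x - y) * indicator A x \<le> ennreal M * indicator A x"
              by (simp add: indicator_def)
            then show False using nle by (meson add_increasing zero_le order_trans)
          qed
        qed
      qed
    qed
    have gr: "emeasure lborel (ball y r) \<le> ennreal (unit_ball_vol d * r powr d)" if "0 < r" for r
      using that by (simp add: emeasure_ball d_def powr_realpow)
    have "(\<integral>\<^sup>+ x. Wker s Phi (x - y) * indicator A x \<partial>lborel)
        \<le> (\<integral>\<^sup>+ x. ennreal M * (indicator (ball y 1) x * ennreal (norm (y - x) powr (-s))) + ennreal M * indicator A x \<partial>lborel)"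
      by (rule nn_integral_mono_AE[OF ae])
    also have "\<dots> = ennreal M * (\<integral>\<^sup>+ x. indicator (ball y 1) x * ennreal (norm (y - x) powr (-s)) \<partial>lborel)
        + ennreal M * emeasure lborel A"
      using Ab by (subst nn_integral_add) (auto simp: nn_integral_cmult)
    also have "\<dots> \<le> ennreal M * ennreal (Kc * 1 powr (d - s)) + ennreal M * emeasure lborel A"
      unfolding Kc_def
      by (intro add_mono mult_left_mono tail_bound[OF sets_lborel s] gr) (auto simp: d_def sd)
    also have "\<dots> = ennreal (M * Kc + M * enn2real (emeasure lborel A))"
    proof -
      have q: "2 powr (s - d) < 1" using sd s by (simp add: powr_less_one d_def)
      have Kc: "0 \<le> Kc" unfolding Kc_def using q by (simp add: d_def)
      have eA: "emeasure lborel A = ennreal (enn2real (emeasure lborel A))"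
        using emeasure_compact_finite[OF cK] by (simp add: ennreal_enn2real less_top)
      show ?thesis using Kc Mp
        by (subst eA) (simp add: ennreal_mult[symmetric] ennreal_plus[symmetric] del: ennreal_plus)
    qed
    finally show "(\<integral>\<^sup>+ x. Wker s Phi (x - y) * indicator A x \<partial>lborel) \<le> ennreal (M * Kc + M * enn2real (emeasure lborel A))" .
  qed
  also have "\<dots> = ennreal (M * Kc + M * enn2real (emeasure lborel A)) * emeasure \<nu> (space \<nu>)"
    by simp
  also have "\<dots> < \<infinity>"
  proof -
    have "emeasure \<nu> (space \<nu>) < top" using fin.emeasure_finite[of "space \<nu>"] by (metis less_top)
    then show ?thesis by (simp add: ennreal_mult_less_top)
  qed
  finally show ?thesis .
qed

lemma emeasure_scale:
  fixes S :: "(real^'n) set"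
  assumes S: "S \<in> sets borel" and a: "0 < a"
  shows "emeasure lborel ((\<lambda>x. (1 / a) *\<^sub>R x) -` S) = ennreal (a ^ CARD('n)) * emeasure lborel S"
proof -
  have c: "(1 / a) \<noteq> 0" using a by simp
  have m: "(\<lambda>x::real^'n. 0 + (1 / a) *\<^sub>R x) \<in> borel \<rightarrow>\<^sub>M borel"
    by (intro borel_measurable_continuous_onI continuous_intros)
  have "emeasure lborel S = emeasure (density (distr lborel borel (\<lambda>x::real^'n. 0 + (1 / a) *\<^sub>R x)) (\<lambda>_. \<bar>1 / a\<bar> ^ DIM(real^'n))) S"
  proof -
    have "lborel = density (distr lborel borel (\<lambda>x::real^'n. 0 + (1 / a) *\<^sub>R x)) (\<lambda>_. \<bar>1 / a\<bar> ^ DIM(real^'n))"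
      by (rule lborel_affine[OF c])
    then show ?thesis by simp
  qed
  also have "\<dots> = ennreal (\<bar>1 / a\<bar> ^ DIM(real^'n)) * emeasure lborel ((\<lambda>x. (1 / a) *\<^sub>R x) -` S)"
    using S m by (simp add: emeasure_density nn_integral_cmult_indicator emeasure_distr)
  finally have e: "emeasure lborel S = ennreal ((1 / a) ^ CARD('n)) * emeasure lborel ((\<lambda>x. (1 / a) *\<^sub>R x) -` S)"
    using a by simp
  have "ennreal (a ^ CARD('n)) * emeasure lborel S
      = ennreal (a ^ CARD('n)) * ennreal ((1 / a) ^ CARD('n)) * emeasure lborel ((\<lambda>x. (1 / a) *\<^sub>R x) -` S)"
    by (simp add: e mult.assoc)
  also have "ennreal (a ^ CARD('n)) * ennreal ((1 / a) ^ CARD('n)) = 1"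
    using a by (simp add: ennreal_mult[symmetric] power_mult_distrib[symmetric])
  finally show ?thesis by simp
qed

definition rcone :: "(real^'n) set \<Rightarrow> (real^'n) set" where
  "rcone A = {x \<in> cball 0 1. sgn x \<in> A}"

lemma cone_borel: "A \<in> sets borel \<Longrightarrow> rcone A \<in> sets borel"
proof -
  assume A: "A \<in> sets borel"
  have "rcone A = cball 0 1 \<inter> sgn -` A" by (auto simp: rcone_def)
  moreover have "sgn -` A \<in> sets borel"
    using measurable_sets[OF borel_measurable_sgn A] by simp
  ultimately show ?thesis by simp
qed

lemma cone_sub: "rcone A \<subseteq> cball 0 1" by (auto simp: rcone_def)

lemma cone_scale:
  fixes A :: "(real^'n) set"
  assumes "0 < a" "a \<le> 1"
  shows "(\<lambda>x. (1 / a) *\<^sub>R x) -` rcone A = rcone A \<inter> cball 0 a"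
proof (rule set_eqI)
  fix x :: "real^'n"
  have "sgn ((1 / a) *\<^sub>R x) = sgn x" using assms by (simp add: sgn_scaleR)
  moreover have "norm ((1 / a) *\<^sub>R x) \<le> 1 \<longleftrightarrow> norm x \<le> a" using assms by (simp add: field_simps)
  moreover have "norm x \<le> a \<Longrightarrow> norm x \<le> 1" using assms by simp
  ultimately show "x \<in> (\<lambda>x. (1 / a) *\<^sub>R x) -` rcone A \<longleftrightarrow> x \<in> rcone A \<inter> cball 0 a"
    by (auto simp: rcone_def)
qed

lemma measure_cone_shell:
  fixes A :: "(real^'n) set"
  assumes A: "A \<in> sets borel" and a: "0 < a" "a \<le> 1"
  shows "measure lborel (rcone A - cball 0 a) = (1 - a ^ CARD('n)) * measure lborel (rcone A)"
proof -
  have cb: "rcone A \<in> sets borel" by (rule cone_borel[OF A])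
  have fin: "emeasure lborel (rcone A) \<noteq> \<infinity>"
  proof -
    have "emeasure lborel (rcone A) \<le> emeasure lborel (cball (0::real^'n) 1)"
      by (rule emeasure_mono[OF cone_sub]) simp
    then show ?thesis using emeasure_lborel_cball_finite[of "0::real^'n" 1] by (auto simp: top_unique)
  qed
  have e: "emeasure lborel (rcone A \<inter> cball 0 a) = ennreal (a ^ CARD('n)) * emeasure lborel (rcone A)"
    using emeasure_scale[OF cb a(1)] cone_scale[OF a, of A] by simp
  have "measure lborel (rcone A \<inter> cball 0 a) = a ^ CARD('n) * measure lborel (rcone A)"
    using e fin a by (simp add: measure_def enn2real_mult)
  moreover have "rcone A - cball 0 a = rcone A - (rcone A \<inter> cball 0 a)" by auto
  moreover have "measure lborel (rcone A - (rcone A \<inter> cball 0 a)) = measure lborel (rcone A) - measure lborel (rcone A \<inter> cball 0 a)"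
    using fin cb by (intro measure_Diff) auto
  ultimately show ?thesis by (simp add: algebra_simps)
qed

lemma measure_le_lborel:
  "A \<subseteq> B \<Longrightarrow> B \<in> sets borel \<Longrightarrow> emeasure lborel B < \<infinity> \<Longrightarrow> measure lborel A \<le> measure lborel B"
  unfolding measure_def by (intro enn2real_mono emeasure_mono) auto

lemma norm_minus_sgn: "x \<noteq> 0 \<Longrightarrow> norm (x - sgn x) = \<bar>norm x - 1\<bar>"
proof -
  assume x: "x \<noteq> 0"
  have "x - sgn x = (1 - 1 / norm x) *\<^sub>R x" by (simp add: sgn_div_norm algebra_simps inverse_eq_divide)
  then have "norm (x - sgn x) = \<bar>1 - 1 / norm x\<bar> * norm x" by simp
  also have "\<dots> = \<bar>norm x - 1\<bar>" using x by (simp add: abs_mult[symmetric] field_simps)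
  finally show ?thesis .
qed

lemma cone_growth:
  fixes u :: "real^'n"
  assumes r: "0 < r"
  shows "measure lborel (rcone (ball u r)) \<le> unit_ball_vol (CARD('n)) * 2 ^ CARD('n) * r ^ (CARD('n) - 1)"
proof -
  define d where "d = CARD('n)"
  have d1: "1 \<le> d" by (simp add: d_def Suc_le_eq)
  have ubv: "0 < unit_ball_vol d" by simp
  have cb: "rcone (ball u r) \<in> sets borel" by (rule cone_borel) simp
  have V1: "measure lborel (rcone (ball u r)) \<le> unit_ball_vol d"
  proof -
    have "measure lborel (rcone (ball u r)) \<le> measure lborel (cball (0::real^'n) 1)"
      by (rule measure_le_lborel[OF cone_sub]) (simp, rule emeasure_lborel_cball_finite)
    also have "\<dots> = unit_ball_vol d" by (simp add: content_cball d_def)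
    finally show ?thesis .
  qed
  show ?thesis
  proof (cases "1 \<le> r")
    case True
    have "1 \<le> (2::real) ^ d * r ^ (d - 1)"
      using True by (metis mult_mono' one_le_numeral one_le_power mult_1 zero_le_one)
    then have "unit_ball_vol d \<le> unit_ball_vol d * (2 ^ d * r ^ (d - 1))"
      using ubv by (simp add: mult_le_cancel_left1 not_less[symmetric])
    from order_trans[OF V1 this] show ?thesis by (simp add: d_def mult.assoc)
  next
    case False
    define a where "a = 1 - r"
    have a: "0 < a" "a \<le> 1" using False r by (auto simp: a_def)
    have sub: "rcone (ball u r) - cball 0 a \<subseteq> ball u (2 * r)"
    proof
      fix x assume x: "x \<in> rcone (ball u r) - cball 0 a"
      then have nx: "a < norm x" "norm x \<le> 1" "sgn x \<in> ball u r" by (auto simp: rcone_def)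
      then have x0: "x \<noteq> 0" using a by auto
      have "dist u x \<le> dist u (sgn x) + dist (sgn x) x" by (rule dist_triangle)
      also have "dist (sgn x) x = 1 - norm x"
        using norm_minus_sgn[OF x0] nx by (simp add: dist_norm norm_minus_commute)
      also have "\<dots> < r" using nx by (simp add: a_def)
      finally show "x \<in> ball u (2 * r)" using nx by simp
    qed
    have "(1 - a ^ d) * measure lborel (rcone (ball u r)) = measure lborel (rcone (ball u r) - cball 0 a)"
      using measure_cone_shell[of "ball u r" a] a by (simp add: d_def)
    also have "\<dots> \<le> measure lborel (ball u (2 * r))"
      by (rule measure_le_lborel[OF sub]) (simp, rule emeasure_lborel_ball_finite)
    also have "\<dots> = unit_ball_vol d * (2 * r) ^ d" using r by (simp add: content_ball d_def)
    finally have ineq: "(1 - a ^ d) * measure lborel (rcone (ball u r)) \<le> unit_ball_vol d * (2 * r) ^ d" .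
    have "a ^ d \<le> a ^ 1" using a d1 by (intro power_decreasing) auto
    then have ra: "r \<le> 1 - a ^ d" by (simp add: a_def)
    have "r * measure lborel (rcone (ball u r)) \<le> (1 - a ^ d) * measure lborel (rcone (ball u r))"
      using ra by (intro mult_right_mono) auto
    also note ineq
    also have "unit_ball_vol d * (2 * r) ^ d = r * (unit_ball_vol d * 2 ^ d * r ^ (d - 1))"
      using d1 by (simp add: power_mult_distrib power_eq_if[of r d] algebra_simps)
    finally have "r * measure lborel (rcone (ball u r)) \<le> r * (unit_ball_vol d * 2 ^ d * r ^ (d - 1))" .
    then show ?thesis using r by (simp add: d_def)
  qed
qed

lemma sets_sphere_prob [simp]: "sets (sphere_prob :: (real^'n) measure) = sets borel"
  by (simp add: sphere_prob_def)

lemma sphere_prob_eq: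
  fixes B :: "(real^'n) set"
  assumes B: "B \<in> sets borel"
  shows "emeasure sphere_prob B = ennreal (measure lborel (rcone B) / unit_ball_vol (CARD('n)))"
proof -
  have "emeasure sphere_prob B = emeasure (uniform_measure lborel (cball (0::real^'n) 1)) (sgn -` B)"
    using B by (simp add: sphere_prob_def emeasure_distr)
  also have "\<dots> = emeasure lborel (cball 0 1 \<inter> sgn -` B) / emeasure lborel (cball (0::real^'n) 1)"
    using measurable_sets[OF borel_measurable_sgn B] by (subst emeasure_uniform_measure) auto
  also have "cball 0 1 \<inter> sgn -` B = rcone B" by (auto simp: rcone_def)
  also have "emeasure lborel (rcone B) = ennreal (measure lborel (rcone B))"
  proof -
    have "emeasure lborel (rcone B) \<le> emeasure lborel (cball (0::real^'n) 1)"
      by (rule emeasure_mono[OF cone_sub]) simp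
    then show ?thesis using emeasure_lborel_cball_finite[of "0::real^'n" 1]
      by (intro emeasure_eq_ennreal_measure) (auto simp: top_unique)
  qed
  also have "emeasure lborel (cball (0::real^'n) 1) = ennreal (unit_ball_vol (CARD('n)))"
    by (simp add: emeasure_cball)
  finally show ?thesis by (simp add: divide_ennreal)
qed

lemma finite_sphere_prob: "finite_measure (sphere_prob :: (real^'n) measure)"
proof (rule finite_measureI)
  have "space (sphere_prob :: (real^'n) measure) = UNIV" by (simp add: sphere_prob_def)
  then show "emeasure (sphere_prob :: (real^'n) measure) (space sphere_prob) \<noteq> \<infinity>"
    by (simp add: sphere_prob_eq)
qed

lemma sphere_growth:
  fixes u :: "real^'n"
  assumes r: "0 < r"
  shows "emeasure sphere_prob (ball u r) \<le> ennreal (2 ^ CARD('n) * r powr (real CARD('n) - 1))"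
proof -
  have d1: "1 \<le> CARD('n)" by (simp add: Suc_le_eq)
  have "measure lborel (rcone (ball u r)) / unit_ball_vol (CARD('n)) \<le> 2 ^ CARD('n) * r ^ (CARD('n) - 1)"
    using cone_growth[OF r, of u] by (simp add: divide_le_eq mult.commute mult.left_commute)
  also have "r ^ (CARD('n) - 1) = r powr (real CARD('n) - 1)"
    using r d1 by (simp add: powr_realpow[symmetric] of_nat_diff)
  finally show ?thesis by (simp add: sphere_prob_eq ennreal_leI)
qed

lemma sphere_support:
  fixes z :: "real^'n"
  assumes "ball z r \<inter> sphere 0 1 = {}"
  shows "emeasure sphere_prob (ball z r) = 0"
proof -
  have "rcone (ball z r) \<subseteq> {0}"
    using assms by (auto simp: rcone_def norm_sgn split: if_splits)
  then have "measure lborel (rcone (ball z r)) \<le> measure lborel {0::real^'n}"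
    by (intro measure_le_lborel) auto
  then have "measure lborel (rcone (ball z r)) = 0" by (simp add: measure_nonneg antisym)
  then show ?thesis by (simp add: sphere_prob_eq)
qed

lemma Bern_aux: "0 \<le> w \<Longrightarrow> w \<le> 1 \<Longrightarrow> 1 - (1 - w) ^ n \<le> real n * (w::real)"
  using Bernoulli_inequality[of "- w" n] by simp

lemma shell_measure:
  fixes z :: "real^'n"
  assumes w: "0 < w" "w \<le> r"
  shows "measure lborel (ball z r \<inter> (cball 0 1 - cball 0 (1 - w)))
     \<le> real CARD('n) * unit_ball_vol (CARD('n)) * 4 ^ CARD('n) * r ^ (CARD('n) - 1) * w"
proof -
  define d where "d = CARD('n)"
  have d1: "1 \<le> d" by (simp add: d_def Suc_le_eq)
  have ubv: "0 < unit_ball_vol d" by simp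
  have r: "0 < r" using w by simp
  have Sb: "ball z r \<inter> (cball 0 1 - cball 0 (1 - w)) \<in> sets borel" by auto
  show ?thesis
  proof (cases "w \<le> 1 / 2")
    case True
    define a where "a = 1 - w"
    have a: "0 < a" "a \<le> 1" using True w by (auto simp: a_def)
    have sub: "ball z r \<inter> (cball 0 1 - cball 0 (1 - w)) \<subseteq> rcone (ball z (2 * r)) - cball 0 a"
    proof
      fix y assume y: "y \<in> ball z r \<inter> (cball 0 1 - cball 0 (1 - w))"
      then have ny: "norm y \<le> 1" "1 - w < norm y" "dist z y < r" by auto
      then have y0: "y \<noteq> 0" using True by auto
      have "dist z (sgn y) \<le> dist z y + dist y (sgn y)" by (rule dist_triangle)
      also have "dist y (sgn y) = 1 - norm y" using norm_minus_sgn[OF y0] ny by (simp add: dist_norm)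
      finally have "dist z (sgn y) < 2 * r" using ny w by simp
      then show "y \<in> rcone (ball z (2 * r)) - cball 0 a" using ny by (auto simp: rcone_def a_def)
    qed
    have "measure lborel (ball z r \<inter> (cball 0 1 - cball 0 (1 - w))) \<le> measure lborel (rcone (ball z (2 * r)) - cball 0 a)"
    proof (rule measure_le_lborel[OF sub])
      show "rcone (ball z (2 * r)) - cball 0 a \<in> sets borel" by (intro sets.Diff cone_borel) auto
      have "emeasure lborel (rcone (ball z (2 * r)) - cball 0 a) \<le> emeasure lborel (cball (0::real^'n) 1)"
        by (rule emeasure_mono) (auto simp: rcone_def)
      then show "emeasure lborel (rcone (ball z (2 * r)) - cball 0 a) < \<infinity>"
        using emeasure_lborel_cball_finite[of "0::real^'n" 1] by (simp add: le_less_trans)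
    qed
    also have "\<dots> = (1 - a ^ d) * measure lborel (rcone (ball z (2 * r)))"
      using measure_cone_shell[of "ball z (2 * r)" a] a by (simp add: d_def)
    also have "\<dots> \<le> (real d * w) * (unit_ball_vol d * 2 ^ d * (2 * r) ^ (d - 1))"
    proof (rule mult_mono)
      show "1 - a ^ d \<le> real d * w" unfolding a_def using Bern_aux[of w d] True w by simp
      show "measure lborel (rcone (ball z (2 * r))) \<le> unit_ball_vol d * 2 ^ d * (2 * r) ^ (d - 1)"
        using cone_growth[of "2 * r" z] r by (simp add: d_def)
      show "0 \<le> real d * w" using w by simp
      show "0 \<le> measure lborel (rcone (ball z (2 * r)))" by (rule measure_nonneg)
    qed
    also have "\<dots> = real d * unit_ball_vol d * (2 ^ d * 2 ^ (d - 1)) * r ^ (d - 1) * w"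
      by (simp add: power_mult_distrib algebra_simps)
    also have "\<dots> \<le> real d * unit_ball_vol d * 4 ^ d * r ^ (d - 1) * w"
    proof -
      have "(2::real) ^ d * 2 ^ (d - 1) \<le> 2 ^ d * 2 ^ d" by (intro mult_left_mono power_increasing) auto
      also have "\<dots> = 4 ^ d" by (simp add: power_mult_distrib[symmetric])
      finally show ?thesis using ubv w r by (intro mult_right_mono mult_left_mono) auto
    qed
    finally show ?thesis by (simp add: d_def)
  next
    case False
    have "measure lborel (ball z r \<inter> (cball 0 1 - cball 0 (1 - w))) \<le> measure lborel (cball (0::real^'n) 1)"
      using emeasure_lborel_cball_finite[of "0::real^'n" 1] by (intro measure_le_lborel) auto
    also have "\<dots> = unit_ball_vol d" by (simp add: content_cball d_def)
    also have "\<dots> \<le> real d * unit_ball_vol d * 4 ^ d * r ^ (d - 1) * w"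
    proof -
      have w2: "1 / 2 \<le> w" "1 / 2 \<le> r" using False w by auto
      have "(1 / 2) ^ (d - 1) \<le> r ^ (d - 1)" using w2 by (intro power_mono) auto
      have "1 \<le> real d * 4 ^ d * ((1 / 2) ^ (d - 1) * (1 / 2))"
      proof -
        have "(1 / 2 :: real) ^ (d - 1) * (1 / 2) = (1 / 2) ^ d" using d1 by (simp add: power_eq_if[of _ d])
        then have "real d * 4 ^ d * ((1 / 2) ^ (d - 1) * (1 / 2)) = real d * 2 ^ d"
          by (simp add: power_divide power_mult_distrib[symmetric] field_simps)
        also have "1 \<le> real d * 2 ^ d" using d1 by (metis mult_mono' of_nat_1 of_nat_mono one_le_numeral one_le_power mult_1 zero_le_one)
        finally show ?thesis by simp
      qed
      also have "\<dots> \<le> real d * 4 ^ d * (r ^ (d - 1) * w)"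
        using w2 \<open>(1 / 2) ^ (d - 1) \<le> r ^ (d - 1)\<close> by (intro mult_left_mono mult_mono) auto
      finally have "unit_ball_vol d * 1 \<le> unit_ball_vol d * (real d * 4 ^ d * (r ^ (d - 1) * w))"
        using ubv by (intro mult_left_mono) auto
      then show ?thesis by (simp add: algebra_simps)
    qed
    finally show ?thesis by (simp add: d_def)
  qed
qed

lemma ball_dens_meas[measurable]: "ball_dens q \<in> borel_measurable (borel :: (real^'n) measure)"
proof -
  have c: "(\<lambda>x::real^'n. 1 - norm x ^ 2) \<in> borel_measurable borel"
    by (intro borel_measurable_continuous_onI continuous_intros)
  show ?thesis unfolding ball_dens_def[abs_def]
    by (intro borel_measurable_times_ennreal borel_measurable_indicator
        measurable_compose[OF _ measurable_ennreal] powr_real_measurable c) auto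
qed

lemma dens_le_dist:
  fixes y :: "real^'n"
  assumes a: "a \<le> 0" and y: "norm y < 1"
  shows "(1 - norm y ^ 2) powr a \<le> (1 - norm y) powr a"
proof -
  have "norm y ^ 2 \<le> norm y" using y by (simp add: power2_eq_square mult_left_le_one_le)
  then show ?thesis using a y by (intro powr_mono2') auto
qed

lemma dens_growth_neg:
  fixes q r :: real and z :: "real^'n"
  defines "\<alpha> \<equiv> (q - real CARD('n)) / 2"
  defines "Csh \<equiv> real CARD('n) * unit_ball_vol (CARD('n)) * 4 ^ CARD('n)"
  assumes a1: "-1 < \<alpha>" and a0: "\<alpha> < 0" and r: "0 < r"
  shows "emeasure (density lborel (ball_dens q)) (ball z r)
     \<le> ennreal ((unit_ball_vol (CARD('n)) + Csh * 2 powr (-\<alpha>) / (1 - 2 powr (-(1 + \<alpha>)))) * r powr (real CARD('n) + \<alpha>))"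
proof -
  define d where "d = CARD('n)"
  have d1: "1 \<le> d" by (simp add: d_def Suc_le_eq)
  define Sh where "Sh k = ball z r \<inter> (cball 0 1 - cball 0 (1 - r / 2 ^ k))" for k :: nat
  define c where "c k = (r / 2 ^ Suc k) powr \<alpha>" for k :: nat
  have Shb: "Sh k \<in> sets borel" for k by (simp add: Sh_def)
  have pw: "ball_dens q y * indicator (ball z r) y
      \<le> ennreal (r powr \<alpha>) * indicator (ball z r) y + (\<Sum>k. ennreal (c k) * indicator (Sh k) y)" for y
  proof (cases "y \<in> ball z r \<and> norm y < 1")
    case False
    have h0: "ball_dens q y * indicator (ball z r) y = 0"
    proof (cases "y \<in> ball z r")
      case True
      with False have "norm y \<ge> 1" by auto
      then show ?thesis by (cases "norm y = 1") (auto simp: ball_dens_def indicator_def)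
    qed simp
    show ?thesis unfolding h0 by simp
  next
    case True
    define t where "t = 1 - norm y"
    have t: "0 < t" "t \<le> 1" using True by (auto simp: t_def)
    have bd: "ball_dens q y * indicator (ball z r) y = ennreal ((1 - norm y ^ 2) powr \<alpha>)"
      using True by (simp add: ball_dens_def \<alpha>_def indicator_def)
    have bt: "(1 - norm y ^ 2) powr \<alpha> \<le> t powr \<alpha>"
      unfolding t_def using dens_le_dist[of \<alpha> y] a0 True by simp
    show ?thesis
    proof (cases "r \<le> t")
      case True
      have "t powr \<alpha> \<le> r powr \<alpha>" using True r a0 by (intro powr_mono2') auto
      then have "ball_dens q y * indicator (ball z r) y \<le> ennreal (r powr \<alpha>) * indicator (ball z r) y"
        using bd bt \<open>y \<in> ball z r \<and> norm y < 1\<close> by (simp add: ennreal_leI)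
      also have "\<dots> \<le> ennreal (r powr \<alpha>) * indicator (ball z r) y + (\<Sum>k. ennreal (c k) * indicator (Sh k) y)"
        by simp
      finally show ?thesis .
    next
      case False
      then obtain k where k: "r / 2 ^ Suc k \<le> t" "t < r / 2 ^ k"
        using dyadic_exists[of t r] t by auto
      have "t powr \<alpha> \<le> c k" unfolding c_def using k r a0 by (intro powr_mono2') auto
      moreover have "y \<in> Sh k" using k True by (auto simp: Sh_def t_def)
      ultimately have "ball_dens q y * indicator (ball z r) y \<le> ennreal (c k) * indicator (Sh k) y"
        using bd bt by (simp add: ennreal_leI)
      also have "\<dots> \<le> (\<Sum>k. ennreal (c k) * indicator (Sh k) y)" by (rule ennreal_le_suminf)
      also have "\<dots> \<le> ennreal (r powr \<alpha>) * indicator (ball z r) y + (\<Sum>k. ennreal (c k) * indicator (Sh k) y)"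
        by simp
      finally show ?thesis .
    qed
  qed
  have "emeasure (density lborel (ball_dens q)) (ball z r) = (\<integral>\<^sup>+y. ball_dens q y * indicator (ball z r) y \<partial>lborel)"
    by (simp add: emeasure_density)
  also have "\<dots> \<le> (\<integral>\<^sup>+y. ennreal (r powr \<alpha>) * indicator (ball z r) y + (\<Sum>k. ennreal (c k) * indicator (Sh k) y) \<partial>lborel)"
    by (intro nn_integral_mono pw)
  also have "\<dots> = ennreal (r powr \<alpha>) * emeasure lborel (ball z r) + (\<Sum>k. ennreal (c k) * emeasure lborel (Sh k))"
    using Shb by (subst nn_integral_add) (auto simp: nn_integral_suminf nn_integral_cmult_indicator)
  also have "\<dots> \<le> ennreal (r powr \<alpha> * (unit_ball_vol d * r powr d))
       + (\<Sum>k. ennreal (Csh * 2 powr (-\<alpha>) * r powr (d + \<alpha>) * (2 powr (-(1 + \<alpha>))) ^ k))"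
  proof (intro add_mono suminf_le)
    show "ennreal (r powr \<alpha>) * emeasure lborel (ball z r) \<le> ennreal (r powr \<alpha> * (unit_ball_vol d * r powr d))"
      using r by (simp add: emeasure_ball d_def powr_realpow ennreal_mult)
  next
    fix k :: nat
    have u: "0 < r / 2 ^ k" "r / 2 ^ k \<le> r" using r by (auto simp: field_simps)
    have "emeasure lborel (Sh k) = ennreal (measure lborel (Sh k))"
    proof (rule emeasure_eq_ennreal_measure)
      have "emeasure lborel (Sh k) \<le> emeasure lborel (ball z r)" by (rule emeasure_mono) (auto simp: Sh_def)
      then show "emeasure lborel (Sh k) \<noteq> top" using emeasure_lborel_ball_finite[of z r] by (auto simp: top_unique)
    qed
    also have "measure lborel (Sh k) \<le> Csh * r ^ (d - 1) * (r / 2 ^ k)"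
      unfolding Sh_def Csh_def d_def by (rule shell_measure[OF u])
    finally have e: "emeasure lborel (Sh k) \<le> ennreal (Csh * r ^ (d - 1) * (r / 2 ^ k))" by (simp add: ennreal_leI)
    have alg: "c k * (Csh * r ^ (d - 1) * (r / 2 ^ k)) = Csh * 2 powr (-\<alpha>) * r powr (d + \<alpha>) * (2 powr (-(1 + \<alpha>))) ^ k"
    proof -
      have r1: "r ^ (d - 1) = r powr (real d - 1)" using r d1 by (simp add: powr_realpow[symmetric] of_nat_diff)
      define p where "p = (2::real) powr \<alpha>"
      have p: "0 < p" by (simp add: p_def)
      have b: "(2 ^ Suc k :: real) powr \<alpha> = p ^ Suc k"
      proof -
        have "(2 ^ Suc k :: real) = 2 powr real (Suc k)" by (rule powr_realpow[symmetric]) simp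
        then have "(2 ^ Suc k::real) powr \<alpha> = 2 powr (real (Suc k) * \<alpha>)" by (simp add: powr_powr)
        also have "\<dots> = p powr real (Suc k)" by (simp add: p_def powr_powr mult.commute)
        also have "\<dots> = p ^ Suc k" using p by (rule powr_realpow)
        finally show ?thesis .
      qed
      have e1: "(r / 2 ^ Suc k) powr \<alpha> = r powr \<alpha> / p ^ Suc k"
        using r b by (simp add: powr_divide)
      have e4: "2 powr (-\<alpha>) = 1 / p" by (simp add: p_def powr_minus_divide)
      have e5: "2 powr (-(1 + \<alpha>)) = 1 / (2 * p)"
      proof -
        have "2 powr (-(1 + \<alpha>)) = 1 / 2 powr (1 + \<alpha>)" by (rule powr_minus_divide)
        also have "2 powr (1 + \<alpha>) = 2 * p" by (simp add: p_def powr_add)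
        finally show ?thesis .
      qed
      have e3: "r powr (real d + \<alpha>) = r powr \<alpha> * r powr (real d - 1) * r"
      proof -
        have "r powr (real d + \<alpha>) = r powr (\<alpha> + (real d - 1) + 1)" by (simp add: algebra_simps)
        also have "\<dots> = r powr (\<alpha> + (real d - 1)) * r powr 1" by (rule powr_add)
        also have "r powr (\<alpha> + (real d - 1)) = r powr \<alpha> * r powr (real d - 1)" by (rule powr_add)
        also have "r powr 1 = r" using r by simp
        finally show ?thesis .
      qed
      show ?thesis unfolding c_def e1 e3 e4 e5 r1 using p
        by (simp add: field_simps power_mult_distrib power_divide)
    qed
    have "ennreal (c k) * emeasure lborel (Sh k) \<le> ennreal (c k) * ennreal (Csh * r ^ (d - 1) * (r / 2 ^ k))"
      using e by (rule mult_left_mono) simp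
    also have "\<dots> = ennreal (Csh * 2 powr (-\<alpha>) * r powr (d + \<alpha>) * (2 powr (-(1 + \<alpha>))) ^ k)"
    proof -
      have "ennreal (c k) * ennreal (Csh * r ^ (d - 1) * (r / 2 ^ k)) = ennreal (c k * (Csh * r ^ (d - 1) * (r / 2 ^ k)))"
        using r by (intro ennreal_mult[symmetric]) (auto simp: c_def Csh_def)
      then show ?thesis by (simp only: alg)
    qed
    finally show "ennreal (c k) * emeasure lborel (Sh k) \<le> ennreal (Csh * 2 powr (-\<alpha>) * r powr (d + \<alpha>) * (2 powr (-(1 + \<alpha>))) ^ k)" .
  qed (auto intro: summableI)
  also have "(\<Sum>k. ennreal (Csh * 2 powr (-\<alpha>) * r powr (d + \<alpha>) * (2 powr (-(1 + \<alpha>))) ^ k))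
      = ennreal (Csh * 2 powr (-\<alpha>) * r powr (d + \<alpha>) / (1 - 2 powr (-(1 + \<alpha>))))"
  proof -
    have q: "2 powr (-(1 + \<alpha>)) < 1" using a1 by (simp add: powr_less_one)
    have Cs: "0 \<le> Csh" by (simp add: Csh_def)
    have "(\<Sum>k. ennreal (Csh * 2 powr (-\<alpha>) * r powr (d + \<alpha>) * (2 powr (-(1 + \<alpha>))) ^ k))
        = ennreal (\<Sum>k. Csh * 2 powr (-\<alpha>) * r powr (d + \<alpha>) * (2 powr (-(1 + \<alpha>))) ^ k)"
      using q Cs by (intro suminf_ennreal2) (auto intro!: summable_mult summable_geometric)
    also have "(\<Sum>k. Csh * 2 powr (-\<alpha>) * r powr (d + \<alpha>) * (2 powr (-(1 + \<alpha>))) ^ k)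
        = Csh * 2 powr (-\<alpha>) * r powr (d + \<alpha>) * (1 / (1 - 2 powr (-(1 + \<alpha>))))"
      using q by (subst suminf_mult) (auto simp: suminf_geometric summable_geometric)
    finally show ?thesis by simp
  qed
  also have "ennreal (r powr \<alpha> * (unit_ball_vol d * r powr d)) + ennreal (Csh * 2 powr (-\<alpha>) * r powr (d + \<alpha>) / (1 - 2 powr (-(1 + \<alpha>))))
      = ennreal ((unit_ball_vol d + Csh * 2 powr (-\<alpha>) / (1 - 2 powr (-(1 + \<alpha>)))) * r powr (d + \<alpha>))"
  proof -
    have q: "2 powr (-(1 + \<alpha>)) < 1" using a1 by (simp add: powr_less_one)
    have Cs: "0 \<le> Csh" by (simp add: Csh_def)
    have "r powr \<alpha> * (unit_ball_vol d * r powr d) = unit_ball_vol d * r powr (d + \<alpha>)"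
      using r by (simp add: powr_add)
    then show ?thesis using q Cs r
      by (subst ennreal_plus[symmetric]) (auto simp: field_simps)
  qed
  finally show ?thesis by (simp add: d_def)
qed

lemma dens_growth_bounded:
  fixes z :: "real^'n"
  assumes B: "0 \<le> B" and r: "0 < r" and bd: "\<And>y. y \<in> ball z r \<Longrightarrow> ball_dens q y \<le> ennreal B"
  shows "emeasure (density lborel (ball_dens q)) (ball z r) \<le> ennreal (B * unit_ball_vol (CARD('n)) * r powr real CARD('n))"
proof -
  have "emeasure (density lborel (ball_dens q)) (ball z r) = (\<integral>\<^sup>+y. ball_dens q y * indicator (ball z r) y \<partial>lborel)"
    by (simp add: emeasure_density)
  also have "\<dots> \<le> (\<integral>\<^sup>+y. ennreal B * indicator (ball z r) y \<partial>lborel)"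
    by (intro nn_integral_mono) (auto simp: indicator_def bd)
  also have "\<dots> = ennreal B * emeasure lborel (ball z r)" by (simp add: nn_integral_cmult_indicator)
  also have "\<dots> = ennreal (B * unit_ball_vol (CARD('n)) * r powr real CARD('n))"
    using B r by (simp add: emeasure_ball powr_realpow ennreal_mult mult.assoc)
  finally show ?thesis .
qed

lemma dens_support:
  fixes z :: "real^'n"
  assumes "ball z r \<inter> cball 0 1 = {}"
  shows "emeasure (density lborel (ball_dens q)) (ball z r) = 0"
proof -
  have "emeasure (density lborel (ball_dens q)) (ball z r) = (\<integral>\<^sup>+y. ball_dens q y * indicator (ball z r) y \<partial>lborel)"
    by (simp add: emeasure_density)
  also have "(\<lambda>y. ball_dens q y * indicator (ball z r) y) = (\<lambda>_. 0)"
    using assms by (auto simp: ball_dens_def indicator_def fun_eq_iff)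
  finally show ?thesis by simp
qed

lemma dens_le_one:
  assumes "0 \<le> a"
  shows "indicator (cball 0 1) y * ennreal ((1 - norm (y::real^'n) ^ 2) powr a) \<le> 1"
proof (cases "norm y \<le> 1")
  case True
  then have "norm y ^ 2 \<le> 1" by (simp add: power_le_one)
  then have "(1 - norm y ^ 2) powr a \<le> 1"
    using assms powr_mono2[of a "1 - norm y ^ 2" 1] by simp
  then show ?thesis using True by (simp add: indicator_def ennreal_leI)
qed (simp add: indicator_def)

lemma dens_interior_bound:
  fixes y :: "real^'n"
  assumes rho: "0 \<le> \<rho>" "\<rho> < 1" and y: "norm y < \<rho>"
  shows "ball_dens q y \<le> ennreal (max 1 ((1 - \<rho>^2) powr ((q - real CARD('n)) / 2)))"
proof -
  define a where "a = (q - real CARD('n)) / 2"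
  have y1: "norm y \<le> 1" using y rho by simp
  have "norm y ^ 2 \<le> \<rho> ^ 2" using y by (intro power_mono) auto
  moreover have "\<rho> ^ 2 < 1" using rho by (simp add: abs_square_less_1)
  ultimately have b: "1 - \<rho>^2 \<le> 1 - norm y ^ 2" "0 < 1 - \<rho>^2" by auto
  have "(1 - norm y ^ 2) powr a \<le> max 1 ((1 - \<rho>^2) powr a)"
  proof (cases "0 \<le> a")
    case True
    have "norm y ^ 2 \<le> 1" using y1 by (simp add: power_le_one)
    then have "(1 - norm y ^ 2) powr a \<le> 1" using True b powr_mono2[of a "1 - norm y ^ 2" 1] by simp
    then show ?thesis by simp
  next
    case False
    then have "(1 - norm y ^ 2) powr a \<le> (1 - \<rho>^2) powr a" using b by (intro powr_mono2') auto
    then show ?thesis by simp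
  qed
  then show ?thesis using y1 by (simp add: ball_dens_def a_def indicator_def ennreal_leI)
qed

lemma dens_Z_pos: "(\<integral>\<^sup>+ y. ball_dens q (y::real^'n) \<partial>lborel) \<noteq> 0"
proof -
  define a where "a = (q - real CARD('n)) / 2"
  define c where "c = min 1 ((3/4) powr a)"
  have c: "0 < c" by (simp add: c_def)
  have pw: "ennreal c * indicator (ball 0 (1/2)) y \<le> ball_dens q y" for y :: "real^'n"
  proof (cases "y \<in> ball 0 (1/2)")
    case True
    then have ny: "norm y < 1/2" by simp
    have "norm y ^ 2 \<le> (1/2)^2" using ny by (intro power_mono) auto
    then have b: "3/4 \<le> 1 - norm y ^ 2" "1 - norm y ^ 2 \<le> 1" by (auto simp: power2_eq_square)
    have "c \<le> (1 - norm y ^ 2) powr a"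
    proof (cases "0 \<le> a")
      case True
      then have "(3/4) powr a \<le> (1 - norm y ^ 2) powr a" using b by (intro powr_mono2) auto
      then show ?thesis by (simp add: c_def)
    next
      case False
      then have "1 powr a \<le> (1 - norm y ^ 2) powr a" using b by (intro powr_mono2') auto
      then show ?thesis by (simp add: c_def)
    qed
    then show ?thesis using True ny by (simp add: ball_dens_def a_def indicator_def ennreal_leI)
  qed simp
  have "0 < ennreal c * emeasure lborel (ball (0::real^'n) (1/2))"
    using c by (simp add: emeasure_ball ennreal_mult'' ennreal_zero_less_mult_iff)
  also have "\<dots> = (\<integral>\<^sup>+ y. ennreal c * indicator (ball 0 (1/2)) (y::real^'n) \<partial>lborel)"
    by (simp add: nn_integral_cmult_indicator)
  also have "\<dots> \<le> (\<integral>\<^sup>+ y. ball_dens q (y::real^'n) \<partial>lborel)" by (intro nn_integral_mono pw)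
  finally show ?thesis by simp
qed

lemma mu_q_dens:
  fixes q :: real
  assumes "q \<noteq> real CARD('n) - 2"
  shows "\<exists>cz\<ge>0. \<forall>B\<in>sets borel. emeasure (mu_q q :: (real^'n) measure) B = emeasure (density lborel (ball_dens q)) B * ennreal cz"
proof -
  define Z where "Z = (\<integral>\<^sup>+ y. ball_dens q (y::real^'n) \<partial>lborel)"
  have Z: "Z \<noteq> 0" using dens_Z_pos by (simp add: Z_def)
  have "inverse Z \<noteq> top" using Z by simp
  then obtain cz where cz: "0 \<le> cz" "inverse Z = ennreal cz" by (cases "inverse Z") auto
  show ?thesis
  proof (intro exI[of _ cz] conjI ballI cz)
    fix B :: "(real^'n) set" assume B: "B \<in> sets borel"
    have "emeasure (mu_q q :: (real^'n) measure) B = (\<integral>\<^sup>+ y. ball_dens q y / Z * indicator B y \<partial>lborel)"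
      using assms B by (simp add: mu_q_def Z_def emeasure_density)
    also have "\<dots> = (\<integral>\<^sup>+ y. ball_dens q y * indicator B y / Z \<partial>lborel)"
      by (intro nn_integral_cong) (simp add: ennreal_times_divide mult.commute)
    also have "\<dots> = (\<integral>\<^sup>+ y. ball_dens q y * indicator B y \<partial>lborel) / Z"
      using B by (intro nn_integral_divide borel_measurable_times_ennreal borel_measurable_indicator) auto
    also have "\<dots> = emeasure (density lborel (ball_dens q)) B * ennreal cz"
      using B cz by (simp add: emeasure_density divide_ennreal_def)
    finally show "emeasure (mu_q q :: (real^'n) measure) B = emeasure (density lborel (ball_dens q)) B * ennreal cz" .
  qed
qed

lemma sets_mu_q[simp]: "sets (mu_q q :: (real^'n) measure) = sets borel"
  by (simp add: mu_q_def)

lemma finite_mu_q: "finite_measure (mu_q q :: (real^'n) measure)"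
proof (cases "q = real CARD('n) - 2")
  case True
  then show ?thesis using finite_sphere_prob by (simp add: mu_q_def)
next
  case False
  let ?Z = "(\<integral>\<^sup>+ y. ball_dens q (y::real^'n) \<partial>lborel)"
  have Z: "?Z \<noteq> 0" by (rule dens_Z_pos)
  show ?thesis
  proof (rule finite_measureI)
    have "emeasure (mu_q q :: (real^'n) measure) (space (mu_q q)) = (\<integral>\<^sup>+ y. ball_dens q (y::real^'n) / ?Z \<partial>lborel)"
      using False by (simp add: mu_q_def emeasure_density)
    also have "\<dots> = ?Z / ?Z" by (rule nn_integral_divide) measurable
    also have "\<dots> \<le> 1"
      using Z by (cases "?Z = top") (auto simp: top.not_eq_extremum)
    finally show "emeasure (mu_q q :: (real^'n) measure) (space (mu_q q)) \<noteq> \<infinity>"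
      by (auto simp: top_unique)
  qed
qed

lemma mu_q_growth:
  fixes q :: real
  assumes q: "q \<ge> real CARD('n) - 2"
  shows "\<exists>C\<ge>0. \<forall>z r. 0 < r \<longrightarrow> emeasure (mu_q q :: (real^'n) measure) (ball z r)
     \<le> ennreal (C * r powr (if q = real CARD('n) - 2 then real CARD('n) - 1
                             else real CARD('n) + min ((q - real CARD('n)) / 2) 0))"
proof (cases "q = real CARD('n) - 2")
  case True
  show ?thesis
    by (intro exI[of _ "2 ^ CARD('n)"]) (use True sphere_growth in \<open>auto simp: mu_q_def\<close>)
next
  case False
  define \<alpha> where "\<alpha> = (q - real CARD('n)) / 2"
  have a1: "-1 < \<alpha>" using q False by (simp add: \<alpha>_def)
  obtain cz where cz: "0 \<le> cz" "\<And>B. B \<in> sets borel \<Longrightarrow> emeasure (mu_q q :: (real^'n) measure) B = emeasure (density lborel (ball_dens q)) B * ennreal cz"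
    using mu_q_dens[OF False] by blast
  show ?thesis
  proof (cases "0 \<le> \<alpha>")
    case True
    show ?thesis
    proof (intro exI[of _ "unit_ball_vol (CARD('n)) * cz"] conjI allI impI)
      show "0 \<le> unit_ball_vol (real CARD('n)) * cz" using cz by simp
      fix z :: "real^'n" and r :: real assume r: "0 < r"
      have "emeasure (density lborel (ball_dens q)) (ball z r) \<le> ennreal (1 * unit_ball_vol (CARD('n)) * r powr real CARD('n))"
        using True dens_le_one[of \<alpha>] by (intro dens_growth_bounded r) (auto simp: ball_dens_def \<alpha>_def)
      then have "emeasure (mu_q q :: (real^'n) measure) (ball z r) \<le> ennreal (unit_ball_vol (CARD('n)) * r powr real CARD('n)) * ennreal cz"
        using cz by (simp add: mult_right_mono)
      also have "\<dots> = ennreal (unit_ball_vol (CARD('n)) * cz * r powr real CARD('n))"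
        using cz by (simp add: ennreal_mult[symmetric] mult_ac)
      finally show "emeasure (mu_q q :: (real^'n) measure) (ball z r) \<le> ennreal (unit_ball_vol (CARD('n)) * cz * r powr (if q = real CARD('n) - 2 then real CARD('n) - 1
                             else real CARD('n) + min ((q - real CARD('n)) / 2) 0))"
        using False True by (simp add: \<alpha>_def)
    qed
  next
    case neg: False
    define C0 where "C0 = unit_ball_vol (CARD('n)) + (real CARD('n) * unit_ball_vol (CARD('n)) * 4 ^ CARD('n)) * 2 powr (-\<alpha>) / (1 - 2 powr (-(1 + \<alpha>)))"
    have C0: "0 \<le> C0"
    proof -
      have "2 powr (-(1 + \<alpha>)) < 1" using a1 by (simp add: powr_less_one)
      then show ?thesis by (simp add: C0_def)
    qed
    show ?thesis
    proof (intro exI[of _ "C0 * cz"] conjI allI impI)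
      show "0 \<le> C0 * cz" using cz C0 by simp
      fix z :: "real^'n" and r :: real assume r: "0 < r"
      have "emeasure (density lborel (ball_dens q)) (ball z r) \<le> ennreal (C0 * r powr (real CARD('n) + \<alpha>))"
        unfolding C0_def \<alpha>_def by (rule dens_growth_neg) (use a1 neg r in \<open>auto simp: \<alpha>_def\<close>)
      then have "emeasure (mu_q q :: (real^'n) measure) (ball z r) \<le> ennreal (C0 * r powr (real CARD('n) + \<alpha>)) * ennreal cz"
        using cz by (simp add: mult_right_mono)
      also have "\<dots> = ennreal (C0 * cz * r powr (real CARD('n) + \<alpha>))"
        using cz C0 by (simp add: ennreal_mult[symmetric] mult_ac)
      finally show "emeasure (mu_q q :: (real^'n) measure) (ball z r) \<le> ennreal (C0 * cz * r powr (if q = real CARD('n) - 2 then real CARD('n) - 1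
                             else real CARD('n) + min ((q - real CARD('n)) / 2) 0))"
        using False neg by (simp add: \<alpha>_def)
    qed
  qed
qed

lemma mu_q_interior:
  fixes q :: real and z0 :: "real^'n"
  assumes z0: "norm z0 < 1"
  shows "\<exists>\<epsilon>>0. \<exists>r0>0. \<exists>C\<ge>0. \<forall>z\<in>ball z0 \<epsilon>. \<forall>r. 0 < r \<and> r \<le> r0 \<longrightarrow>
           emeasure (mu_q q :: (real^'n) measure) (ball z r) \<le> ennreal (C * r powr real CARD('n))"
proof -
  define \<rho> where "\<rho> = (1 + norm z0) / 2"
  define \<epsilon> where "\<epsilon> = (1 - norm z0) / 4"
  have \<rho>: "0 \<le> \<rho>" "\<rho> < 1" using z0 by (auto simp: \<rho>_def)
  have \<epsilon>: "0 < \<epsilon>" using z0 by (simp add: \<epsilon>_def)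
  have sub: "ball z r \<subseteq> ball 0 \<rho>" if "z \<in> ball z0 \<epsilon>" "r \<le> \<epsilon>" for z r
  proof
    fix y assume "y \<in> ball z r"
    then have "dist z y < r" by simp
    moreover have "dist z0 z < \<epsilon>" using that by simp
    moreover have "dist 0 y \<le> dist 0 z0 + dist z0 z + dist z y"
      using dist_triangle[of 0 y z0] dist_triangle[of z0 y z] by linarith
    ultimately have "norm y < norm z0 + \<epsilon> + \<epsilon>" using that by simp
    then have "norm y < (1 + norm z0) / 2" unfolding \<epsilon>_def by (simp add: field_simps)
    then show "y \<in> ball 0 \<rho>" by (simp add: \<rho>_def)
  qed
  show ?thesis
  proof (cases "q = real CARD('n) - 2")
    case True
    show ?thesis
    proof (intro exI[of _ \<epsilon>] exI[of _ \<epsilon>] exI[of _ 0] conjI \<epsilon> order.refl ballI allI impI, elim conjE)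
      fix z r assume z: "z \<in> ball z0 \<epsilon>" and r: "0 < r" "r \<le> \<epsilon>"
      have "ball z r \<inter> sphere 0 1 = {}" using sub[OF z r(2)] \<rho> by auto
      then show "emeasure (mu_q q :: (real^'n) measure) (ball z r) \<le> ennreal (0 * r powr real CARD('n))"
        using True sphere_support by (simp add: mu_q_def)
    qed
  next
    case False
    obtain cz where cz: "0 \<le> cz" "\<And>B. B \<in> sets borel \<Longrightarrow> emeasure (mu_q q :: (real^'n) measure) B = emeasure (density lborel (ball_dens q)) B * ennreal cz"
      using mu_q_dens[OF False] by blast
    define B where "B = max 1 ((1 - \<rho>^2) powr ((q - real CARD('n)) / 2))"
    have B: "0 \<le> B" by (simp add: B_def)
    have C: "0 \<le> B * unit_ball_vol (CARD('n)) * cz" using B cz by simp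
    have main: "\<forall>z\<in>ball z0 \<epsilon>. \<forall>r. 0 < r \<and> r \<le> \<epsilon> \<longrightarrow>
           emeasure (mu_q q :: (real^'n) measure) (ball z r) \<le> ennreal ((B * unit_ball_vol (CARD('n)) * cz) * r powr real CARD('n))"
    proof (intro ballI allI impI)
      fix z r assume z: "z \<in> ball z0 \<epsilon>" and r': "0 < r \<and> r \<le> \<epsilon>"
      then have r: "0 < r" "r \<le> \<epsilon>" by auto
      have "emeasure (density lborel (ball_dens q)) (ball z r) \<le> ennreal (B * unit_ball_vol (CARD('n)) * r powr real CARD('n))"
        using sub[OF z r(2)] \<rho> unfolding B_def
        by (intro dens_growth_bounded r dens_interior_bound) auto
      then have "emeasure (mu_q q :: (real^'n) measure) (ball z r) \<le> ennreal (B * unit_ball_vol (CARD('n)) * r powr real CARD('n)) * ennreal cz"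
        using cz by (simp add: mult_right_mono)
      also have "\<dots> = ennreal (B * unit_ball_vol (CARD('n)) * cz * r powr real CARD('n))"
        using cz B by (simp add: ennreal_mult[symmetric] mult_ac)
      finally show "emeasure (mu_q q :: (real^'n) measure) (ball z r) \<le> ennreal ((B * unit_ball_vol (CARD('n)) * cz) * r powr real CARD('n))" .
    qed
    show ?thesis using C main \<epsilon> by blast
  qed
qed

lemma mu_q_exterior:
  fixes q :: real and z0 :: "real^'n"
  assumes z0: "1 < norm z0"
  shows "\<exists>\<epsilon>>0. \<exists>r0>0. \<forall>z\<in>ball z0 \<epsilon>. \<forall>r. 0 < r \<and> r \<le> r0 \<longrightarrow>
           emeasure (mu_q q :: (real^'n) measure) (ball z r) = 0"
proof -
  define \<epsilon> where "\<epsilon> = (norm z0 - 1) / 3"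
  have \<epsilon>: "0 < \<epsilon>" using z0 by (simp add: \<epsilon>_def)
  have disj: "ball z r \<inter> cball 0 1 = {}" if "z \<in> ball z0 \<epsilon>" "r \<le> \<epsilon>" for z r
  proof -
    have "1 < norm y" if "y \<in> ball z r" for y
    proof -
      have "dist 0 z0 \<le> dist 0 y + dist y z + dist z z0"
        using dist_triangle[of 0 z0 y] dist_triangle[of y z0 z] by linarith
      moreover have "dist y z < r" using that by (simp add: dist_commute)
      moreover have "dist z z0 < \<epsilon>" using \<open>z \<in> ball z0 \<epsilon>\<close> by (simp add: dist_commute)
      ultimately have "norm z0 - \<epsilon> - \<epsilon> < norm y" using \<open>r \<le> \<epsilon>\<close> by simp
      then show ?thesis using z0 unfolding \<epsilon>_def by (simp add: field_simps)
    qed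
    then show ?thesis by force
  qed
  show ?thesis
  proof (intro exI[of _ \<epsilon>] exI[of _ \<epsilon>] conjI \<epsilon> ballI allI impI, elim conjE)
    fix z r assume z: "z \<in> ball z0 \<epsilon>" and r: "0 < r" "r \<le> \<epsilon>"
    show "emeasure (mu_q q :: (real^'n) measure) (ball z r) = 0"
    proof (cases "q = real CARD('n) - 2")
      case True
      have "ball z r \<inter> sphere 0 1 = {}" using disj[OF z r(2)] by auto
      then show ?thesis using True sphere_support by (simp add: mu_q_def)
    next
      case False
      obtain cz where cz: "\<And>B. B \<in> sets borel \<Longrightarrow> emeasure (mu_q q :: (real^'n) measure) B = emeasure (density lborel (ball_dens q)) B * ennreal cz"
        using mu_q_dens[OF False] by blast
      show ?thesis using cz[of "ball z r"] dens_support[OF disj[OF z r(2)]] by simp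
    qed
  qed
qed

lemma T_meas: "(\<lambda>x. R *v (D *v x)) \<in> borel_measurable (borel :: (real^'n) measure)"
  for R D :: "real^'n^'n"
  by (intro borel_measurable_continuous_onI continuous_intros linear_continuous_on matrix_vector_mul_linear
      continuous_on_compose2[OF linear_continuous_on[OF matrix_vector_mul_bounded_linear]])
     auto

lemma muE_ball:
  fixes \<mu> :: "(real^'n) measure" and R D :: "real^'n^'n"
  assumes sets: "sets \<mu> = sets borel" and R: "orthogonal_matrix R"
    and Dd: "\<forall>i j. i \<noteq> j \<longrightarrow> D $ i $ j = 0" and Dp: "\<forall>i. D $ i $ i > 0"
  shows "emeasure (distr \<mu> borel (\<lambda>x. R *v (D *v x))) (ball x r)
          \<le> emeasure \<mu> (ball (Tinv R D x) (r / dmin D))"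
proof -
  have dp: "0 < dmin D" using dmin_pos[OF Dp] .
  have m: "(\<lambda>x. R *v (D *v x)) \<in> \<mu> \<rightarrow>\<^sub>M borel"
    using T_meas[of R D] by (simp add: measurable_cong_sets[OF sets refl])
  have "emeasure (distr \<mu> borel (\<lambda>x. R *v (D *v x))) (ball x r) = emeasure \<mu> ((\<lambda>x. R *v (D *v x)) -` ball x r \<inter> space \<mu>)"
    using m by (simp add: emeasure_distr)
  also have "\<dots> \<le> emeasure \<mu> (ball (Tinv R D x) (r / dmin D))"
  proof (rule emeasure_mono)
    show "ball (Tinv R D x) (r / dmin D) \<in> sets \<mu>" by (simp add: sets)
    show "(\<lambda>x. R *v (D *v x)) -` ball x r \<inter> space \<mu> \<subseteq> ball (Tinv R D x) (r / dmin D)"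
    proof clarify
      fix y assume "R *v (D *v y) \<in> ball x r"
      then have d: "norm (x - R *v (D *v y)) < r" by (simp add: dist_norm)
      have "Tinv R D x - y = Tinv R D (x - R *v (D *v y))"
        using Tinv_diff[of R D x "R *v (D *v y)"] Tinv_T[OF R Dd Dp] by simp
      then have "norm (Tinv R D x - y) \<le> norm (x - R *v (D *v y)) / dmin D"
        using norm_Tinv[OF R Dp] by simp
      also have "\<dots> < r / dmin D" using d dp by (simp add: divide_strict_right_mono)
      finally show "y \<in> ball (Tinv R D x) (r / dmin D)" by (simp add: dist_norm)
    qed
  qed
  finally show ?thesis .
qed

lemma Tinv_dist:
  fixes R D :: "real^'n^'n"
  assumes R: "orthogonal_matrix R" and Dp: "\<forall>i. D $ i $ i > 0"
  shows "dist (Tinv R D x) (Tinv R D y) \<le> dist x y / dmin D"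
  using norm_Tinv[OF R Dp, of "x - y"] by (simp add: dist_norm Tinv_diff)

lemma frontier_E:
  fixes R D :: "real^'n^'n"
  assumes R: "orthogonal_matrix R"
    and Dd: "\<forall>i j. i \<noteq> j \<longrightarrow> D $ i $ j = 0" and Dp: "\<forall>i. D $ i $ i > 0"
    and x0: "norm (Tinv R D x0) = 1"
  shows "x0 \<in> frontier ((\<lambda>x. R *v (D *v x)) ` cball 0 1)"
proof -
  let ?E = "(\<lambda>x. R *v (D *v x)) ` cball (0::real^'n) 1"
  have Eiff: "y \<in> ?E \<longleftrightarrow> norm (Tinv R D y) \<le> 1" for y
  proof
    assume "y \<in> ?E"
    then obtain w where "norm w \<le> 1" "y = R *v (D *v w)" by auto
    then show "norm (Tinv R D y) \<le> 1" using Tinv_T[OF R Dd Dp] by simp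
  next
    assume "norm (Tinv R D y) \<le> 1"
    then show "y \<in> ?E" using T_Tinv[OF R Dd Dp, of y] by (intro image_eqI[of _ _ "Tinv R D y"]) auto
  qed
  have inE: "x0 \<in> ?E" using Eiff x0 by simp
  have x00: "x0 \<noteq> 0"
  proof
    assume "x0 = 0"
    then have "Tinv R D x0 = 0" using Tinv_scale[of R D 0 x0] by simp
    then show False using x0 by simp
  qed
  have "x0 \<notin> interior ?E"
  proof
    assume "x0 \<in> interior ?E"
    then obtain e where e: "0 < e" "ball x0 e \<subseteq> ?E" by (auto simp: mem_interior)
    define t where "t = e / (2 * norm x0)"
    have t: "0 < t" using e x00 by (simp add: t_def)
    have "dist x0 ((1 + t) *\<^sub>R x0) = t * norm x0"
      using t by (simp add: dist_norm algebra_simps)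
    also have "\<dots> < e" using e x00 by (simp add: t_def)
    finally have "(1 + t) *\<^sub>R x0 \<in> ?E" using e by auto
    then have "norm (Tinv R D ((1 + t) *\<^sub>R x0)) \<le> 1" using Eiff by blast
    moreover have "norm (Tinv R D ((1 + t) *\<^sub>R x0)) = 1 + t"
      using t x0 by (simp add: Tinv_scale)
    ultimately show False using t by simp
  qed
  then show ?thesis using inE closure_subset[of ?E] by (auto simp: frontier_def)
qed

theorem lemma3p2:
  fixes s q :: real
    and Phi :: "real^'n \<Rightarrow> real"
    and R D :: "real^'n^'n"
  assumes "CARD('n) \<ge> 2"
    and "0 < s" and "s < real CARD('n)"
    and "q \<ge> real CARD('n) - 2"
    and "continuous_on (sphere 0 1) Phi"
    and "\<forall>x\<in>sphere 0 1. Phi (- x) = Phi x"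
    and "\<forall>x\<in>sphere 0 1. Phi x > 0"
    and "orthogonal_matrix R" and "det R = 1"
    and "\<forall>i j. i \<noteq> j \<longrightarrow> D $ i $ j = 0"
    and "\<forall>i. D $ i $ i > 0"
  defines "E \<equiv> (\<lambda>x. R *v (D *v x)) ` cball 0 1"
    and "muE \<equiv> distr (mu_q q) borel (\<lambda>x. R *v (D *v x))"
  shows "potential s Phi muE \<in> borel_measurable lebesgue
      \<and> (\<forall>K. compact K \<longrightarrow> (\<integral>\<^sup>+ x \<in> K. potential s Phi muE x \<partial>lebesgue) < \<infinity>)
      \<and> (\<forall>x. x \<notin> frontier E \<longrightarrow> potential s Phi muE x < \<infinity>)
      \<and> continuous_on (- frontier E) (\<lambda>x. enn2real (potential s Phi muE x))
      \<and> (s < (q + real CARD('n)) / 2 \<longrightarrow>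
           (\<forall>x. potential s Phi muE x < \<infinity>)
           \<and> continuous_on UNIV (\<lambda>x. enn2real (potential s Phi muE x)))"
proof -
  define d where "d = CARD('n)"
  define \<sigma> where "\<sigma> = dmin D"
  define Ti where "Ti = Tinv R D"
  have R: "orthogonal_matrix R" and Dd: "\<forall>i j. i \<noteq> j \<longrightarrow> D $ i $ j = 0" and Dp: "\<forall>i. D $ i $ i > 0"
    using assms by auto
  have sig: "0 < \<sigma>" unfolding \<sigma>_def by (rule dmin_pos[OF Dp])
  have s0: "0 < s" and sd: "s < real CARD('n)" using assms by auto
  obtain b :: "real^'n" where b: "b \<in> Basis" using nonempty_Basis by blast
  have sne: "sphere (0::real^'n) 1 \<noteq> {}" using b by (auto simp: norm_Basis)
  obtain um where um: "um \<in> sphere (0::real^'n) 1" "\<forall>y\<in>sphere 0 1. Phi um \<le> Phi y"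
    using continuous_attains_inf[OF compact_sphere sne assms(5)] by blast
  obtain uM where uM: "uM \<in> sphere (0::real^'n) 1" "\<forall>y\<in>sphere 0 1. Phi y \<le> Phi uM"
    using continuous_attains_sup[OF compact_sphere sne assms(5)] by blast
  have mpos: "0 < Phi um" using um assms(7) by blast
  have Mpos: "0 < Phi uM" using uM(2) um(1) mpos by (meson less_le_trans)
  have K: "kern_ok s Phi (Phi um) (Phi uM)"
    unfolding kern_ok_def using s0 mpos Mpos um uM assms(5) by (auto intro: order.trans)
  have setsE: "sets muE = sets borel" by (simp add: muE_def)
  have finE: "finite_measure muE"
    unfolding muE_def by (rule finite_measure.finite_measure_distr[OF finite_mu_q]) (subst measurable_cong_sets[OF sets_mu_q refl], rule T_meas)
  have trans: "emeasure muE (ball x r) \<le> emeasure (mu_q q :: (real^'n) measure) (ball (Ti x) (r / \<sigma>))" for x r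
    unfolding muE_def Ti_def \<sigma>_def by (rule muE_ball[OF sets_mu_q R Dd Dp])
  have Tid: "dist (Ti x0) (Ti x) < \<epsilon>" if "x \<in> ball x0 (\<epsilon> * \<sigma>)" for x0 x \<epsilon>
  proof -
    have "dist (Ti x0) (Ti x) \<le> dist x0 x / \<sigma>" unfolding Ti_def \<sigma>_def by (rule Tinv_dist[OF R Dp])
    also have "\<dots> < \<epsilon>" using that sig by (simp add: divide_less_eq)
    finally show ?thesis .
  qed
  have LOC: "potential s Phi muE x0 < \<infinity> \<and> isCont (\<lambda>x. enn2real (potential s Phi muE x)) x0"
    if x0: "x0 \<notin> frontier E" for x0
  proof -
    have n1: "norm (Ti x0) \<noteq> 1"
      using frontier_E[OF R Dd Dp, of x0] x0 unfolding E_def Ti_def by blast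
    have "\<exists>\<epsilon>>0. \<exists>r0>0. \<exists>C\<ge>0. \<exists>\<beta>>s. \<forall>x\<in>ball x0 \<epsilon>. \<forall>r. 0 < r \<and> r \<le> r0 \<longrightarrow>
            emeasure muE (ball x r) \<le> ennreal (C * r powr \<beta>)"
    proof (cases "norm (Ti x0) < 1")
      case True
      obtain \<epsilon> r0 C where e: "\<epsilon> > 0" "r0 > 0" "C \<ge> 0"
        and g: "\<forall>z\<in>ball (Ti x0) \<epsilon>. \<forall>r. 0 < r \<and> r \<le> r0 \<longrightarrow>
           emeasure (mu_q q :: (real^'n) measure) (ball z r) \<le> ennreal (C * r powr real CARD('n))"
        using mu_q_interior[OF True, of q] by blast
      have P: "0 < \<epsilon> * \<sigma>" "0 < r0 * \<sigma>" "0 \<le> C / \<sigma> powr real CARD('n)" using e sig by auto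
      have main: "\<forall>x\<in>ball x0 (\<epsilon> * \<sigma>). \<forall>r. 0 < r \<and> r \<le> r0 * \<sigma> \<longrightarrow>
            emeasure muE (ball x r) \<le> ennreal (C / \<sigma> powr real CARD('n) * r powr real CARD('n))"
      proof (intro ballI allI impI)
        fix x r assume x: "x \<in> ball x0 (\<epsilon> * \<sigma>)" and r: "0 < r \<and> r \<le> r0 * \<sigma>"
        have z: "Ti x \<in> ball (Ti x0) \<epsilon>" using Tid[OF x] by simp
        have r': "0 < r / \<sigma>" "r / \<sigma> \<le> r0" using r sig by (auto simp: divide_le_eq)
        have "emeasure muE (ball x r) \<le> emeasure (mu_q q :: (real^'n) measure) (ball (Ti x) (r / \<sigma>))" by (rule trans)
        also have "\<dots> \<le> ennreal (C * (r / \<sigma>) powr real CARD('n))" using g z r' by blast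
        also have "C * (r / \<sigma>) powr real CARD('n) = C / \<sigma> powr real CARD('n) * r powr real CARD('n)"
          using r sig by (simp add: powr_divide)
        finally show "emeasure muE (ball x r) \<le> ennreal (C / \<sigma> powr real CARD('n) * r powr real CARD('n))" .
      qed
      show ?thesis using P main sd by blast
    next
      case False
      then have gt: "1 < norm (Ti x0)" using n1 by simp
      obtain \<epsilon> r0 where e: "\<epsilon> > 0" "r0 > 0"
        and g: "\<forall>z\<in>ball (Ti x0) \<epsilon>. \<forall>r. 0 < r \<and> r \<le> r0 \<longrightarrow>
           emeasure (mu_q q :: (real^'n) measure) (ball z r) = 0"
        using mu_q_exterior[OF gt, of q] by blast
      have P: "0 < \<epsilon> * \<sigma>" "0 < r0 * \<sigma>" "(0::real) \<le> 0" "s < s + 1" using e sig by auto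
      have main: "\<forall>x\<in>ball x0 (\<epsilon> * \<sigma>). \<forall>r. 0 < r \<and> r \<le> r0 * \<sigma> \<longrightarrow>
            emeasure muE (ball x r) \<le> ennreal (0 * r powr (s + 1))"
      proof (intro ballI allI impI)
        fix x r assume x: "x \<in> ball x0 (\<epsilon> * \<sigma>)" and r: "0 < r \<and> r \<le> r0 * \<sigma>"
        have z: "Ti x \<in> ball (Ti x0) \<epsilon>" using Tid[OF x] by simp
        have r': "0 < r / \<sigma>" "r / \<sigma> \<le> r0" using r sig by (auto simp: divide_le_eq)
        have "emeasure muE (ball x r) \<le> emeasure (mu_q q :: (real^'n) measure) (ball (Ti x) (r / \<sigma>))" by (rule trans)
        also have "\<dots> = 0" using g z r' by blast
        finally show "emeasure muE (ball x r) \<le> ennreal (0 * r powr (s + 1))" by simp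
      qed
      show ?thesis using P main by blast
    qed
    then obtain \<epsilon> r0 C \<beta> where e: "\<epsilon> > 0" "r0 > 0" "C \<ge> 0" "\<beta> > s"
      and g: "\<forall>x\<in>ball x0 \<epsilon>. \<forall>r. 0 < r \<and> r \<le> r0 \<longrightarrow> emeasure muE (ball x r) \<le> ennreal (C * r powr \<beta>)"
      by blast
    have pc: "\<forall>x\<in>ball x0 \<epsilon>. potential s Phi muE x < \<infinity>" "isCont (\<lambda>x. enn2real (potential s Phi muE x)) x0"
      using pot_cont[OF K finE setsE e(1) e(2) e(4) e(3)] g by blast+
    then show ?thesis using e(1) by simp
  qed
  have GLOB: "(\<forall>x. potential s Phi muE x < \<infinity>) \<and> continuous_on UNIV (\<lambda>x. enn2real (potential s Phi muE x))"
    if sq: "s < (q + real CARD('n)) / 2"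
  proof -
    define \<beta> where "\<beta> = (if q = real CARD('n) - 2 then real CARD('n) - 1
                             else real CARD('n) + min ((q - real CARD('n)) / 2) 0)"
    obtain C where C: "C \<ge> 0" and g: "\<forall>z r. 0 < r \<longrightarrow> emeasure (mu_q q :: (real^'n) measure) (ball z r) \<le> ennreal (C * r powr \<beta>)"
      using mu_q_growth[OF assms(4)] unfolding \<beta>_def by blast
    have bs: "s < \<beta>" using sq sd by (auto simp: \<beta>_def min_def field_simps)
    have gE: "emeasure muE (ball x r) \<le> ennreal (C / \<sigma> powr \<beta> * r powr \<beta>)" if r: "0 < r" for x r
    proof -
      have "emeasure muE (ball x r) \<le> emeasure (mu_q q :: (real^'n) measure) (ball (Ti x) (r / \<sigma>))" by (rule trans)
      also have "\<dots> \<le> ennreal (C * (r / \<sigma>) powr \<beta>)" using g r sig by simp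
      also have "C * (r / \<sigma>) powr \<beta> = C / \<sigma> powr \<beta> * r powr \<beta>" using r sig by (simp add: powr_divide)
      finally show ?thesis .
    qed
    have pc: "(\<forall>x\<in>ball x0 1. potential s Phi muE x < \<infinity>) \<and> isCont (\<lambda>x. enn2real (potential s Phi muE x)) x0" for x0
      using pot_cont[OF K finE setsE zero_less_one zero_less_one bs, of "C / \<sigma> powr \<beta>" x0] gE C sig by auto
    have "\<forall>x. potential s Phi muE x < \<infinity>" using pc by (metis centre_in_ball zero_less_one)
    moreover have "continuous_on UNIV (\<lambda>x. enn2real (potential s Phi muE x))"
      using pc by (intro continuous_at_imp_continuous_on) auto
    ultimately show ?thesis by blast
  qed
  have meas: "potential s Phi muE \<in> borel_measurable lebesgue"
  proof -
    have "potential s Phi muE \<in> borel_measurable borel" by (rule pot_meas[OF K finE setsE])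
    then have "potential s Phi muE \<in> borel_measurable lborel" by simp
    then show ?thesis by (rule measurable_completion)
  qed
  have L1: "\<forall>K. compact K \<longrightarrow> (\<integral>\<^sup>+ x \<in> K. potential s Phi muE x \<partial>lebesgue) < \<infinity>"
    using pot_L1loc[OF K finE setsE sd] by blast
  have fin: "\<forall>x. x \<notin> frontier E \<longrightarrow> potential s Phi muE x < \<infinity>" using LOC by blast
  have cont: "continuous_on (- frontier E) (\<lambda>x. enn2real (potential s Phi muE x))"
    using LOC by (intro continuous_at_imp_continuous_on) auto
  show ?thesis using meas L1 fin cont GLOB by blast
qed

end
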